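(* Suppose all travel time functions $\tau_{i,p}$ are continuous and all externality functions $g_{i,p,j}$ are constant. Then every feasible budget vector $B$ that is both extremal and Pareto-minimal is strictly implementable: there exists $\lambda\in\mathbb{R}^J_{>0}$ such that $\mathrm{WE}(\lambda)\neq\emptyset$ and every $u\in\mathrm{WE}(\lambda)$ satisfies $G_j(u)\le B_j$ for all $j\in J$.
   Context: Let $G=(V,E)$ be a directed graph and $I$ a finite set of commodities; commodity $i$ has source $s_i$, sink $t_i$ and demand $d_i>0$. $\mathcal P_i$ is the set of simple $s_i$–$t_i$ paths, $\mathcal P=\{(i,p)\}$. A flow $x\in\mathbb{R}^{\mathcal P}_{\ge 0}$ is feasible if $\sum_{p\in\mathcal P_i}x_{i,p}=d_i$ for all $i$; $\mathcal F$ is the set of feasible flows. $J$ is a finite set of externality classes with externality functions $g_{i,p,j}\ge0$ and $G_j(x)=\sum_{(i,p)}g_{i,p,j}(x)x_{i,p}$. Travel times $\tau_{i,p}:\mathcal F\to\mathbb{R}$. For $\lambda\in\mathbb{R}^J_{\ge0}$, $c^\lambda_{i,p}(x)=\tau_{i,p}(x)+\sum_j\lambda_jg_{i,p,j}(x)$; $x\in\mathrm{WE}(\lambda)$ means $x\in\mathcal F$ and $x_{i,p}>0$ implies $c^\lambda_{i,p}(x)\le c^\lambda_{i,q}(x)$ for all $q\in\mathcal P_i$. A budget $B\in\mathbb{R}^J_{\ge0}$ is feasible if some $x\in\mathcal F$ has $G_j(x)\le B_j$ for all $j$; it is Pareto-minimal if no other feasible $B'\ne B$ satisfies $B'_j\le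 B_j$ for all $j$; it is extremal if it is not a convex combination of two distinct feasible budget vectors. *)

theory Defs
  imports "HOL-Analysis.Analysis"
begin

definition simple_path :: "'v set \<Rightarrow> ('v \<times> 'v) set \<Rightarrow> 'v \<Rightarrow> 'v \<Rightarrow> 'v list \<Rightarrow> bool" where
  "simple_path V E s t p \<longleftrightarrow> p \<noteq> [] \<and> hd p = s \<and> last p = t \<and> distinct p \<and> set p \<subseteq> V
     \<and> (\<forall>k. Suc k < length p \<longrightarrow> (p ! k, p ! Suc k) \<in> E)"

definition paths :: "'v set \<Rightarrow> ('v \<times> 'v) set \<Rightarrow> ('i \<Rightarrow> 'v) \<Rightarrow> ('i \<Rightarrow> 'v) \<Rightarrow> 'i \<Rightarrow> 'v list set" where
  "paths V E s t i = {p. simple_path V E (s i) (t i) p}"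

definition Pidx :: "'v set \<Rightarrow> ('v \<times> 'v) set \<Rightarrow> ('i \<Rightarrow> 'v) \<Rightarrow> ('i \<Rightarrow> 'v) \<Rightarrow> 'i set \<Rightarrow> ('i \<times> 'v list) set" where
  "Pidx V E s t I = {(i, p). i \<in> I \<and> p \<in> paths V E s t i}"

text \<open>Feasible flows: vectors in R^\<P> (functions vanishing outside \<P>), nonnegative,
  meeting each demand.\<close>
definition feasible_flows ::
  "'v set \<Rightarrow> ('v \<times> 'v) set \<Rightarrow> ('i \<Rightarrow> 'v) \<Rightarrow> ('i \<Rightarrow> 'v) \<Rightarrow> 'i set \<Rightarrow> ('i \<Rightarrow> real)
    \<Rightarrow> ('i \<times> 'v list \<Rightarrow> real) set" where
  "feasible_flows V E s t I d = {x.
      (\<forall>ip. ip \<notin> Pidx V E s t I \<longrightarrow> x ip = 0)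
    \<and> (\<forall>ip\<in>Pidx V E s t I. x ip \<ge> 0)
    \<and> (\<forall>i\<in>I. (\<Sum>p\<in>paths V E s t i. x (i, p)) = d i)}"

definition Gext ::
  "'v set \<Rightarrow> ('v \<times> 'v) set \<Rightarrow> ('i \<Rightarrow> 'v) \<Rightarrow> ('i \<Rightarrow> 'v) \<Rightarrow> 'i set
    \<Rightarrow> ('i \<Rightarrow> 'v list \<Rightarrow> 'j \<Rightarrow> ('i \<times> 'v list \<Rightarrow> real) \<Rightarrow> real)
    \<Rightarrow> 'j \<Rightarrow> ('i \<times> 'v list \<Rightarrow> real) \<Rightarrow> real" where
  "Gext V E s t I g j x = (\<Sum>(i, p)\<in>Pidx V E s t I. g i p j x * x (i, p))"

text \<open>Budget vectors are elements of R^J_{\<ge>0}, represented as functions vanishing outside J.\<close>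
definition feasible_budget ::
  "'v set \<Rightarrow> ('v \<times> 'v) set \<Rightarrow> ('i \<Rightarrow> 'v) \<Rightarrow> ('i \<Rightarrow> 'v) \<Rightarrow> 'i set \<Rightarrow> ('i \<Rightarrow> real)
    \<Rightarrow> 'j set \<Rightarrow> ('i \<Rightarrow> 'v list \<Rightarrow> 'j \<Rightarrow> ('i \<times> 'v list \<Rightarrow> real) \<Rightarrow> real)
    \<Rightarrow> ('j \<Rightarrow> real) \<Rightarrow> bool" where
  "feasible_budget V E s t I d J g B \<longleftrightarrow>
     (\<forall>j. j \<notin> J \<longrightarrow> B j = 0) \<and> (\<forall>j\<in>J. B j \<ge> 0) \<and>
     (\<exists>x\<in>feasible_flows V E s t I d. \<forall>j\<in>J. Gext V E s t I g j x \<le> B j)"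

definition pareto_minimal where
  "pareto_minimal V E s t I d J g B \<longleftrightarrow> feasible_budget V E s t I d J g B \<and>
     \<not> (\<exists>B'. feasible_budget V E s t I d J g B' \<and> B' \<noteq> B \<and> (\<forall>j\<in>J. B' j \<le> B j))"

definition extremal where
  "extremal V E s t I d J g B \<longleftrightarrow> feasible_budget V E s t I d J g B \<and>
     \<not> (\<exists>B1 B2 (\<theta>::real). feasible_budget V E s t I d J g B1 \<and> feasible_budget V E s t I d J g B2
         \<and> B1 \<noteq> B2 \<and> 0 < \<theta> \<and> \<theta> < 1 \<and> B = (\<lambda>j. \<theta> * B1 j + (1 - \<theta>) * B2 j))"

definition gcost where
  "gcost J \<tau> g (lam :: 'j \<Rightarrow> real) i p x = \<tau> i p x + (\<Sum>j\<in>J. lam j * g i p j x)"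

definition WE where
  "WE V E s t I d J \<tau> g lam = {x. x \<in> feasible_flows V E s t I d \<and>
     (\<forall>i\<in>I. \<forall>p\<in>paths V E s t i. x (i, p) > 0 \<longrightarrow>
        (\<forall>q\<in>paths V E s t i. gcost J \<tau> g lam i p x \<le> gcost J \<tau> g lam i q x))}"

end

theory Submission
  imports Defs
begin

lemma subseq_conv_fin:
  fixes X :: "nat \<Rightarrow> 'a \<Rightarrow> real"
  assumes "finite A" and "\<And>k a. a \<in> A \<Longrightarrow> \<bar>X k a\<bar> \<le> C"
  shows "\<exists>\<sigma> l. strict_mono \<sigma> \<and> (\<forall>a\<in>A. (\<lambda>k. X (\<sigma> k) a) \<longlonglongrightarrow> l a)"
  using assms
proof (induction A rule: finite_induct)
  case empty
  show ?case by (rule exI[of _ id]) (auto simp: strict_mono_def)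
next
  case (insert b A)
  then obtain \<sigma> l where \<sigma>: "strict_mono \<sigma>" "\<forall>a\<in>A. (\<lambda>k. X (\<sigma> k) a) \<longlonglongrightarrow> l a" by force
  have "bounded (range (\<lambda>k. X (\<sigma> k) b))"
    using insert.prems unfolding bounded_iff by (auto intro!: exI[of _ C])
  then obtain l' \<rho> where \<rho>: "strict_mono \<rho>" "((\<lambda>k. X (\<sigma> k) b) \<circ> \<rho>) \<longlonglongrightarrow> l'"
    using bounded_imp_convergent_subsequence by blast
  show ?case
  proof (intro exI conjI ballI)
    show "strict_mono (\<sigma> \<circ> \<rho>)" using \<sigma> \<rho> strict_mono_o by blast
    fix a assume a: "a \<in> insert b A"
    show "(\<lambda>k. X ((\<sigma>\<circ>\<rho>) k) a) \<longlonglongrightarrow> (l(b:=l')) a"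
    proof (cases "a = b")
      case True then show ?thesis using \<rho>(2) by (simp add: o_def)
    next
      case False
      then have "a \<in> A" using a by simp
      have "((\<lambda>k. X (\<sigma> k) a) \<circ> \<rho>) \<longlonglongrightarrow> l a" using LIMSEQ_subseq_LIMSEQ \<sigma>(2) \<rho>(1) \<open>a\<in>A\<close> by blast
      then show ?thesis using False by (simp add: o_def)
    qed
  qed
qed

definition cube :: "nat \<Rightarrow> (nat \<Rightarrow> real) set" where
  "cube n = {z. (\<forall>i<n. 0 \<le> z i \<and> z i \<le> 1) \<and> (\<forall>i. n \<le> i \<longrightarrow> z i = 0)}"

lemma brouwer_cube_nat:
  fixes h :: "(nat \<Rightarrow> real) \<Rightarrow> (nat \<Rightarrow> real)"
  assumes into: "\<And>z. z \<in> cube n \<Longrightarrow> h z \<in> cube n"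
  and cont: "\<And>Z z i. (\<forall>k. Z k \<in> cube n) \<Longrightarrow> z \<in> cube n \<Longrightarrow> (\<forall>i<n. (\<lambda>k. Z k i) \<longlonglongrightarrow> z i)
      \<Longrightarrow> i < n \<Longrightarrow> (\<lambda>k. h (Z k) i) \<longlonglongrightarrow> h z i"
  shows "\<exists>z\<in>cube n. h z = z"
proof -
  define pt :: "nat \<Rightarrow> (nat \<Rightarrow> nat) \<Rightarrow> (nat \<Rightarrow> real)" where
    "pt p x = (\<lambda>i. if i < n then real (x i) / real p else 0)" for p x
  define lab :: "nat \<Rightarrow> (nat \<Rightarrow> nat) \<Rightarrow> nat \<Rightarrow> nat" where
    "lab p x i = (if pt p x i = 0 then 0 else if pt p x i = 1 then 1
        else if pt p x i \<le> h (pt p x) i then 0 else 1)" for p x i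
  have pt_cube: "pt p x \<in> cube n" if "0 < p" "\<forall>i<n. x i \<le> p" for p x
    using that by (auto simp: pt_def cube_def)
  have lab01: "lab p x i = 0 \<or> lab p x i = 1" for p x i by (auto simp: lab_def)
  have lab0: "pt p x i \<le> h (pt p x) i" if "0 < p" "\<forall>i<n. x i \<le> p" "i < n" "lab p x i = 0" for p x i
  proof -
    have "h (pt p x) \<in> cube n" using into pt_cube that by blast
    then show ?thesis using that by (auto simp: lab_def cube_def split: if_splits)
  qed
  have lab1: "h (pt p x) i \<le> pt p x i" if "0 < p" "\<forall>i<n. x i \<le> p" "i < n" "lab p x i = 1" for p x i
  proof -
    have "h (pt p x) \<in> cube n" using into pt_cube that by blast
    then show ?thesis using that by (auto simp: lab_def cube_def split: if_splits)
  qed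
  have kuhn: "\<exists>q. (\<forall>i<n. q i < Suc k) \<and> (\<forall>i<n. \<exists>r s. (\<forall>j<n. q j \<le> r j \<and> r j \<le> q j + 1) \<and>
      (\<forall>j<n. q j \<le> s j \<and> s j \<le> q j + 1) \<and> lab (Suc k) r i \<noteq> lab (Suc k) s i)" for k
  proof -
    have "0 < Suc k" by simp
    moreover have "\<forall>x. (\<forall>i<n. x i \<le> Suc k) \<longrightarrow> (\<forall>i<n. lab (Suc k) x i = 0 \<or> lab (Suc k) x i = 1)"
      using lab01 by blast
    moreover have "\<forall>x. (\<forall>i<n. x i \<le> Suc k) \<longrightarrow> (\<forall>i<n. x i = 0 \<longrightarrow> lab (Suc k) x i = 0)"
      by (auto simp: lab_def pt_def)
    moreover have "\<forall>x. (\<forall>i<n. x i \<le> Suc k) \<longrightarrow> (\<forall>i<n. x i = Suc k \<longrightarrow> lab (Suc k) x i = 1)"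
      by (auto simp: lab_def pt_def)
    ultimately show ?thesis by (rule kuhn_lemma) blast
  qed
  have "\<exists>Q. \<forall>k. (\<forall>i<n. Q k i < Suc k) \<and> (\<forall>i<n. \<exists>r s. (\<forall>j<n. Q k j \<le> r j \<and> r j \<le> Q k j + 1) \<and>
      (\<forall>j<n. Q k j \<le> s j \<and> s j \<le> Q k j + 1) \<and> lab (Suc k) r i \<noteq> lab (Suc k) s i)"
    by (rule choice, rule allI, rule kuhn)
  then obtain Q where Q: "\<forall>k. (\<forall>i<n. Q k i < Suc k) \<and> (\<forall>i<n. \<exists>r s. (\<forall>j<n. Q k j \<le> r j \<and> r j \<le> Q k j + 1) \<and>
      (\<forall>j<n. Q k j \<le> s j \<and> s j \<le> Q k j + 1) \<and> lab (Suc k) r i \<noteq> lab (Suc k) s i)" ..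
  have rs_ex: "\<exists>rs. snd ki < n \<longrightarrow> (\<forall>j<n. Q (fst ki) j \<le> fst rs j \<and> fst rs j \<le> Q (fst ki) j + 1) \<and>
      (\<forall>j<n. Q (fst ki) j \<le> snd rs j \<and> snd rs j \<le> Q (fst ki) j + 1) \<and> lab (Suc (fst ki)) (fst rs) (snd ki) = 0
       \<and> lab (Suc (fst ki)) (snd rs) (snd ki) = 1" for ki
  proof (cases ki)
    case (Pair k i)
    show ?thesis
    proof (cases "i < n")
      case True
      then obtain r s where rs: "\<forall>j<n. Q k j \<le> r j \<and> r j \<le> Q k j + 1" "\<forall>j<n. Q k j \<le> s j \<and> s j \<le> Q k j + 1"
        "lab (Suc k) r i \<noteq> lab (Suc k) s i" using Q by blast
      show ?thesis
      proof (cases "lab (Suc k) r i = 0")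
        case True
        then have "lab (Suc k) s i = 1" using rs(3) lab01 by metis
        then show ?thesis using rs True Pair by (intro exI[of _ "(r,s)"]) auto
      next
        case False
        then have "lab (Suc k) r i = 1" "lab (Suc k) s i = 0" using rs(3) lab01 by metis+
        then show ?thesis using rs Pair by (intro exI[of _ "(s,r)"]) auto
      qed
    qed (use Pair in auto)
  qed
  have "\<exists>RS. \<forall>ki. snd ki < n \<longrightarrow> (\<forall>j<n. Q (fst ki) j \<le> fst (RS ki) j \<and> fst (RS ki) j \<le> Q (fst ki) j + 1) \<and>
      (\<forall>j<n. Q (fst ki) j \<le> snd (RS ki) j \<and> snd (RS ki) j \<le> Q (fst ki) j + 1) \<and> lab (Suc (fst ki)) (fst (RS ki)) (snd ki) = 0
       \<and> lab (Suc (fst ki)) (snd (RS ki)) (snd ki) = 1"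
    by (rule choice, rule allI, rule rs_ex)
  then obtain RS0 where RS0: "\<forall>ki. snd ki < n \<longrightarrow> (\<forall>j<n. Q (fst ki) j \<le> fst (RS0 ki) j \<and> fst (RS0 ki) j \<le> Q (fst ki) j + 1) \<and>
      (\<forall>j<n. Q (fst ki) j \<le> snd (RS0 ki) j \<and> snd (RS0 ki) j \<le> Q (fst ki) j + 1) \<and> lab (Suc (fst ki)) (fst (RS0 ki)) (snd ki) = 0
       \<and> lab (Suc (fst ki)) (snd (RS0 ki)) (snd ki) = 1" ..
  define RS where "RS k i = RS0 (k, i)" for k i
  have RS: "\<And>k i. i < n \<Longrightarrow> (\<forall>j<n. Q k j \<le> fst (RS k i) j \<and> fst (RS k i) j \<le> Q k j + 1) \<and>
      (\<forall>j<n. Q k j \<le> snd (RS k i) j \<and> snd (RS k i) j \<le> Q k j + 1) \<and> lab (Suc k) (fst (RS k i)) i = 0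
       \<and> lab (Suc k) (snd (RS k i)) i = 1"
    unfolding RS_def using RS0 by fastforce
  define zq where "zq k = pt (Suc k) (Q k)" for k
  have Qle: "\<forall>i<n. Q k i \<le> Suc k" for k using Q less_imp_le by blast
  have zq_cube: "zq k \<in> cube n" for k unfolding zq_def using pt_cube Qle by blast
  obtain \<sigma> l where \<sigma>: "strict_mono \<sigma>" "\<forall>i\<in>{..<n}. (\<lambda>k. zq (\<sigma> k) i) \<longlonglongrightarrow> l i"
    using subseq_conv_fin[of "{..<n}" zq 1] zq_cube by (fastforce simp: cube_def)
  define z where "z i = (if i < n then l i else 0)" for i
  have z_cube: "z \<in> cube n"
  proof -
    have "0 \<le> l i \<and> l i \<le> 1" if "i < n" for i
    proof
      have c: "\<And>k. 0 \<le> zq (\<sigma> k) i \<and> zq (\<sigma> k) i \<le> 1" using zq_cube that by (auto simp: cube_def)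
      show "0 \<le> l i" using \<sigma>(2) that c by (intro LIMSEQ_le_const[of "\<lambda>k. zq (\<sigma> k) i"]) auto
      show "l i \<le> 1" using \<sigma>(2) that c by (intro LIMSEQ_le_const2[of "\<lambda>k. zq (\<sigma> k) i"]) auto
    qed
    then show ?thesis by (auto simp: cube_def z_def)
  qed
  have inv0: "(\<lambda>k. 1 / real (Suc (\<sigma> k))) \<longlonglongrightarrow> 0"
  proof -
    have "((\<lambda>k. inverse (real (Suc k))) \<circ> \<sigma>) \<longlonglongrightarrow> 0"
      using LIMSEQ_subseq_LIMSEQ[OF LIMSEQ_inverse_real_of_nat \<sigma>(1)] .
    then show ?thesis by (simp add: o_def divide_inverse)
  qed
  have near: "(\<lambda>k. pt (Suc (\<sigma> k)) (Y k) j) \<longlonglongrightarrow> z j"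
    if Y: "\<And>k. \<forall>j<n. Q (\<sigma> k) j \<le> Y k j \<and> Y k j \<le> Q (\<sigma> k) j + 1" and j: "j < n" for Y j
  proof -
    have d: "(\<lambda>k. pt (Suc (\<sigma> k)) (Y k) j - zq (\<sigma> k) j) \<longlonglongrightarrow> 0"
    proof (rule Lim_null_comparison[OF _ inv0])
      show "\<forall>\<^sub>F k in sequentially. norm (pt (Suc (\<sigma> k)) (Y k) j - zq (\<sigma> k) j) \<le> 1 / real (Suc (\<sigma> k))"
      proof (intro always_eventually allI)
        fix k
        have a: "Q (\<sigma> k) j \<le> Y k j" "Y k j \<le> Q (\<sigma> k) j + 1" using Y j by auto
        have "pt (Suc (\<sigma> k)) (Y k) j - zq (\<sigma> k) j = (real (Y k j) - real (Q (\<sigma> k) j)) / real (Suc (\<sigma> k))"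
          using j by (simp add: pt_def zq_def diff_divide_distrib)
        moreover have "0 \<le> real (Y k j) - real (Q (\<sigma> k) j)" "real (Y k j) - real (Q (\<sigma> k) j) \<le> 1"
          using a by auto
        ultimately show "norm (pt (Suc (\<sigma> k)) (Y k) j - zq (\<sigma> k) j) \<le> 1 / real (Suc (\<sigma> k))"
          by (simp add: divide_right_mono)
      qed
    qed
    have "(\<lambda>k. (pt (Suc (\<sigma> k)) (Y k) j - zq (\<sigma> k) j) + zq (\<sigma> k) j) \<longlonglongrightarrow> 0 + l j"
      using d \<sigma>(2) j by (intro tendsto_add) auto
    then show ?thesis using j by (simp add: z_def)
  qed
  have fix_i: "h z i = z i" if i: "i < n" for i
  proof -
    define A where "A k = pt (Suc (\<sigma> k)) (fst (RS (\<sigma> k) i))" for k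
    define Bp where "Bp k = pt (Suc (\<sigma> k)) (snd (RS (\<sigma> k) i))" for k
    have leA: "\<forall>j<n. fst (RS (\<sigma> k) i) j \<le> Suc (\<sigma> k)" for k
    proof (intro allI impI)
      fix j assume j: "j < n"
      have "Q (\<sigma> k) j < Suc (\<sigma> k)" using Q j by blast
      moreover have "fst (RS (\<sigma> k) i) j \<le> Q (\<sigma> k) j + 1" using RS[OF i, of "\<sigma> k"] j by blast
      ultimately show "fst (RS (\<sigma> k) i) j \<le> Suc (\<sigma> k)" by linarith
    qed
    have leB: "\<forall>j<n. snd (RS (\<sigma> k) i) j \<le> Suc (\<sigma> k)" for k
    proof (intro allI impI)
      fix j assume j: "j < n"
      have "Q (\<sigma> k) j < Suc (\<sigma> k)" using Q j by blast
      moreover have "snd (RS (\<sigma> k) i) j \<le> Q (\<sigma> k) j + 1" using RS[OF i, of "\<sigma> k"] j by blast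
      ultimately show "snd (RS (\<sigma> k) i) j \<le> Suc (\<sigma> k)" by linarith
    qed
    have Acube: "\<forall>k. A k \<in> cube n" using pt_cube leA unfolding A_def by blast
    have Bcube: "\<forall>k. Bp k \<in> cube n" using pt_cube leB unfolding Bp_def by blast
    have Aconv: "\<forall>j<n. (\<lambda>k. A k j) \<longlonglongrightarrow> z j"
      unfolding A_def
    proof (intro allI impI)
      fix j assume "j < n"
      show "(\<lambda>k. pt (Suc (\<sigma> k)) (fst (RS (\<sigma> k) i)) j) \<longlonglongrightarrow> z j"
        by (rule near[OF _ \<open>j < n\<close>]) (use RS[OF i] in blast)
    qed
    have Bconv: "\<forall>j<n. (\<lambda>k. Bp k j) \<longlonglongrightarrow> z j"
      unfolding Bp_def
    proof (intro allI impI)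
      fix j assume "j < n"
      show "(\<lambda>k. pt (Suc (\<sigma> k)) (snd (RS (\<sigma> k) i)) j) \<longlonglongrightarrow> z j"
        by (rule near[OF _ \<open>j < n\<close>]) (use RS[OF i] in blast)
    qed
    have hA: "(\<lambda>k. h (A k) i) \<longlonglongrightarrow> h z i" by (rule cont[OF Acube z_cube Aconv i])
    have hB: "(\<lambda>k. h (Bp k) i) \<longlonglongrightarrow> h z i" by (rule cont[OF Bcube z_cube Bconv i])
    have "A k i \<le> h (A k) i" for k
      unfolding A_def using lab0[OF _ leA i] RS[OF i] by simp
    then have 1: "z i \<le> h z i" using Aconv hA i by (intro LIMSEQ_le[of "\<lambda>k. A k i" _ "\<lambda>k. h (A k) i"]) auto
    have "h (Bp k) i \<le> Bp k i" for k
      unfolding Bp_def using lab1[OF _ leB i] RS[OF i] by simp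
    then have 2: "h z i \<le> z i" using Bconv hB i by (intro LIMSEQ_le[of "\<lambda>k. h (Bp k) i" _ "\<lambda>k. Bp k i"]) auto
    show ?thesis using 1 2 by simp
  qed
  have "h z = z"
  proof
    fix i show "h z i = z i"
    proof (cases "i < n")
      case True then show ?thesis using fix_i by simp
    next
      case False
      then show ?thesis using into[OF z_cube] z_cube by (simp add: cube_def)
    qed
  qed
  then show ?thesis using z_cube by blast
qed


lemma tendsto_fun_pointwise:
  fixes X :: "'b \<Rightarrow> 'a \<Rightarrow> real"
  assumes "\<And>a. ((\<lambda>k. X k a) \<longlongrightarrow> x a) F"
  shows "(X \<longlongrightarrow> x) F"
proof (rule topological_tendstoI)
  fix S :: "('a \<Rightarrow> real) set" assume S: "open S" "x \<in> S"
  then have "openin (product_topology (\<lambda>i. euclidean) UNIV) S" by (simp add: open_fun_def)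
  then obtain U where U: "finite {i \<in> UNIV. U i \<noteq> topspace euclidean}"
      "\<forall>i\<in>UNIV. openin euclidean (U i)" "x \<in> PiE UNIV U" "PiE UNIV U \<subseteq> S"
    using S(2) unfolding openin_product_topology_alt by blast
  have U': "finite {i. U i \<noteq> UNIV}" "\<And>i. open (U i)" "\<And>i. x i \<in> U i" using U by (auto simp: PiE_iff)
  have "eventually (\<lambda>k. \<forall>a\<in>{i. U i \<noteq> UNIV}. X k a \<in> U a) F"
    using U' by (intro eventually_ball_finite ballI topological_tendstoD[OF assms]) auto
  then show "eventually (\<lambda>k. X k \<in> S) F"
  proof eventually_elim
    case (elim k)
    then have "X k \<in> PiE UNIV U" by (auto simp: PiE_iff)
    then show ?case using U(4) by blast
  qed
qed

definition FF :: "'i set \<Rightarrow> ('i \<Rightarrow> 'p set) \<Rightarrow> ('i \<Rightarrow> real) \<Rightarrow> ('i \<times> 'p \<Rightarrow> real) set" where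
  "FF I Pth d = {x. (\<forall>ip. ip \<notin> Sigma I Pth \<longrightarrow> x ip = 0) \<and> (\<forall>ip\<in>Sigma I Pth. x ip \<ge> 0)
      \<and> (\<forall>i\<in>I. (\<Sum>p\<in>Pth i. x (i,p)) = d i)}"

lemma FF_le:
  assumes "x \<in> FF I Pth d" "i \<in> I" "p \<in> Pth i" "finite (Pth i)"
  shows "0 \<le> x (i,p)" "x (i,p) \<le> d i"
proof -
  show "0 \<le> x (i,p)" using assms by (auto simp: FF_def)
  have "x (i,p) \<le> (\<Sum>q\<in>Pth i. x (i,q))"
    using assms by (intro member_le_sum) (auto simp: FF_def)
  then show "x (i,p) \<le> d i" using assms by (auto simp: FF_def)
qed

lemma wardrop_fixpoint:
  fixes c :: "'i \<Rightarrow> 'p \<Rightarrow> ('i \<times> 'p \<Rightarrow> real) \<Rightarrow> real"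
  assumes fP: "finite (Pth i)" and dpos: "d i > 0"
    and sum: "(\<Sum>p\<in>Pth i. x (i,p)) = d i"
    and nonneg: "\<And>p. p \<in> Pth i \<Longrightarrow> x (i,p) \<ge> 0"
    and fixp: "\<And>p. p \<in> Pth i \<Longrightarrow> x (i,p) = (x (i,p) + d i * max 0 ((\<Sum>q\<in>Pth i. x (i,q) * c i q x) / d i - c i p x))
        / (1 + (\<Sum>q\<in>Pth i. max 0 ((\<Sum>q'\<in>Pth i. x (i,q') * c i q' x) / d i - c i q x)))"
    and p: "p \<in> Pth i" "x (i,p) > 0" and q: "q \<in> Pth i"
  shows "c i p x \<le> c i q x"
proof -
  define avg where "avg = (\<Sum>q\<in>Pth i. x (i,q) * c i q x) / d i"
  define gain where "gain q = max 0 (avg - c i q x)" for q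
  define G where "G = (\<Sum>q\<in>Pth i. gain q)"
  have gain0: "gain q \<ge> 0" for q by (simp add: gain_def)
  have G0: "G \<ge> 0" unfolding G_def by (intro sum_nonneg gain0)
  have eq: "x (i,r) * G = d i * gain r" if "r \<in> Pth i" for r
  proof -
    have "x (i,r) = (x (i,r) + d i * gain r) / (1 + G)"
      using fixp[OF that] by (simp add: gain_def G_def avg_def)
    then have "x (i,r) * (1 + G) = x (i,r) + d i * gain r" using G0
      by (simp add: field_simps)
    then show ?thesis by (simp add: algebra_simps)
  qed
  have avg_eq: "(\<Sum>r\<in>Pth i. x (i,r) * (avg - c i r x)) = 0"
  proof -
    have "(\<Sum>r\<in>Pth i. x (i,r) * (avg - c i r x)) = avg * (\<Sum>r\<in>Pth i. x (i,r)) - (\<Sum>r\<in>Pth i. x (i,r) * c i r x)"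
      by (simp add: algebra_simps sum_subtractf sum_distrib_left)
    also have "\<dots> = 0" using sum dpos by (simp add: avg_def)
    finally show ?thesis .
  qed
  have "G = 0"
  proof (rule ccontr)
    assume "G \<noteq> 0"
    then have Gp: "G > 0" using G0 by simp
    have "(\<Sum>r\<in>Pth i. x (i,r) * (avg - c i r x)) > 0"
    proof (rule sum_pos2[OF fP p(1)])
      have "gain p > 0" using eq[OF p(1)] Gp p(2) dpos
        by (metis mult_pos_pos mult_pos_pos zero_less_mult_pos)
      then have "avg - c i p x > 0" by (simp add: gain_def)
      then show "0 < x (i,p) * (avg - c i p x)" using p(2) by simp
      show "0 \<le> x (i,r) * (avg - c i r x)" if "r \<in> Pth i" for r
      proof (cases "x (i,r) > 0")
        case True
        then have "gain r > 0" using eq[OF that] Gp dpos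
          by (metis mult_pos_pos zero_less_mult_pos)
        then show ?thesis using True by (simp add: gain_def)
      next
        case False
        then show ?thesis using nonneg[OF that] by simp
      qed
    qed
    then show False using avg_eq by simp
  qed
  then have "\<forall>r\<in>Pth i. gain r = 0" using sum_nonneg_eq_0_iff[OF fP] gain0 unfolding G_def by blast
  then have ge: "c i r x \<ge> avg" if "r \<in> Pth i" for r using that by (force simp: gain_def)
  have s2: "(\<Sum>r\<in>Pth i. x (i,r) * (c i r x - avg)) = 0"
  proof -
    have "(\<Sum>r\<in>Pth i. x (i,r) * (c i r x - avg)) = - (\<Sum>r\<in>Pth i. x (i,r) * (avg - c i r x))"
      by (simp add: sum_negf[symmetric] algebra_simps)
    then show ?thesis using avg_eq by simp
  qed
  have "\<forall>r\<in>Pth i. x (i,r) * (c i r x - avg) = 0"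
  proof (rule sum_nonneg_eq_0_iff[OF fP, THEN iffD1, OF _ s2])
    show "0 \<le> x (i,r) * (c i r x - avg)" if "r \<in> Pth i" for r
      using ge[OF that] nonneg[OF that] by simp
  qed
  then have "c i p x = avg" using p by force
  then show ?thesis using ge[OF q] by simp
qed


lemma wardrop_exists:
  fixes c :: "'i \<Rightarrow> 'p \<Rightarrow> ('i \<times> 'p \<Rightarrow> real) \<Rightarrow> real"
  assumes fI: "finite I" and fP: "\<And>i. i \<in> I \<Longrightarrow> finite (Pth i)" and ne: "\<And>i. i \<in> I \<Longrightarrow> Pth i \<noteq> {}"
    and dpos: "\<And>i. i \<in> I \<Longrightarrow> d i > 0"
    and cont: "\<And>i p. i \<in> I \<Longrightarrow> p \<in> Pth i \<Longrightarrow> continuous_on (FF I Pth d) (c i p)"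
  shows "\<exists>x\<in>FF I Pth d. \<forall>i\<in>I. \<forall>p\<in>Pth i. x (i,p) > 0 \<longrightarrow> (\<forall>q\<in>Pth i. c i p x \<le> c i q x)"
proof -
  let ?S = "Sigma I Pth"
  let ?F = "FF I Pth d"
  have fS: "finite ?S" using fI fP by auto
  define n where "n = card ?S"
  obtain e where e: "bij_betw e {0..<n} ?S" using ex_bij_betw_nat_finite[OF fS] n_def by blast
  define e' where "e' = inv_into {0..<n} e"
  have ee': "ip \<in> ?S \<Longrightarrow> e (e' ip) = ip" for ip
    unfolding e'_def using bij_betw_inv_into_right[OF e] by blast
  have e'_in: "ip \<in> ?S \<Longrightarrow> e' ip < n" for ip
    unfolding e'_def using e by (metis atLeastLessThan_iff bij_betw_def inv_into_into)
  have e_in: "k < n \<Longrightarrow> e k \<in> ?S" for k using e by (metis atLeastLessThan_iff bij_betw_apply zero_le)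
  define p0 where "p0 i = (SOME p. p \<in> Pth i)" for i
  have p0: "i \<in> I \<Longrightarrow> p0 i \<in> Pth i" for i using ne unfolding p0_def by (simp add: some_in_eq)
  define zz where "zz z ip = z (e' ip)" for z :: "nat \<Rightarrow> real" and ip
  define sz where "sz z i = (\<Sum>q\<in>Pth i. zz z (i,q))" for z i
  define mx where "mx z i = max 1 (sz z i)" for z i
  define Phi where "Phi z = (\<lambda>ip. if ip \<in> ?S then d (fst ip) * zz z ip / mx z (fst ip)
       + (if snd ip = p0 (fst ip) then d (fst ip) * (1 - sz z (fst ip) / mx z (fst ip)) else 0) else 0)" for z
  define psi where "psi x = (\<lambda>k. if k < n then x (e k) / d (fst (e k)) else 0)" for x :: "'i \<times> 'p \<Rightarrow> real"
  define avg where "avg x i = (\<Sum>q\<in>Pth i. x (i,q) * c i q x) / d i" for x i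
  define gain where "gain x i p = max 0 (avg x i - c i p x)" for x i p
  define T where "T x = (\<lambda>ip. if ip \<in> ?S then (x ip + d (fst ip) * gain x (fst ip) (snd ip))
      / (1 + (\<Sum>q\<in>Pth (fst ip). gain x (fst ip) q)) else 0)" for x
  define h where "h z = psi (T (Phi z))" for z
  have mx1: "mx z i \<ge> 1" for z i by (simp add: mx_def)
  have gain0: "gain x i p \<ge> 0" for x i p by (simp add: gain_def)
  have Gsum0: "(\<Sum>q\<in>Pth i. gain x i q) \<ge> 0" for x i by (intro sum_nonneg gain0)
  have Phi_FF: "Phi z \<in> ?F" if z: "z \<in> cube n" for z
  proof -
    have zz0: "zz z ip \<ge> 0" if "ip \<in> ?S" for ip
      using z e'_in[OF that] by (auto simp: zz_def cube_def)
    have sz0: "sz z i \<ge> 0" if "i \<in> I" for i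
      unfolding sz_def using zz0 that by (intro sum_nonneg) auto
    have szmx: "sz z i / mx z i \<le> 1" for i
      using mx1[of z i] by (simp add: mx_def divide_le_eq_1 max_def)
    have "\<forall>ip\<in>?S. Phi z ip \<ge> 0"
    proof
      fix ip assume ip: "ip \<in> ?S"
      have "d (fst ip) * zz z ip / mx z (fst ip) \<ge> 0"
        using dpos[of "fst ip"] ip zz0[OF ip] mx1[of z "fst ip"] by auto
      moreover have "d (fst ip) * (1 - sz z (fst ip) / mx z (fst ip)) \<ge> 0"
        using dpos[of "fst ip"] ip szmx[of "fst ip"] by auto
      ultimately show "Phi z ip \<ge> 0" using ip by (simp add: Phi_def)
    qed
    moreover have "(\<Sum>p\<in>Pth i. Phi z (i,p)) = d i" if i: "i \<in> I" for i
    proof -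
      have "(\<Sum>p\<in>Pth i. Phi z (i,p)) = (\<Sum>p\<in>Pth i. d i * zz z (i,p) / mx z i
         + (if p = p0 i then d i * (1 - sz z i / mx z i) else 0))"
        using i by (intro sum.cong) (auto simp: Phi_def)
      also have "\<dots> = d i * sz z i / mx z i + d i * (1 - sz z i / mx z i)"
        using fP[OF i] p0[OF i]
        by (simp add: sum.distrib sz_def sum_divide_distrib[symmetric] sum_distrib_left[symmetric])
      also have "\<dots> = d i" by (simp add: algebra_simps)
      finally show ?thesis .
    qed
    ultimately show ?thesis by (auto simp: FF_def Phi_def)
  qed
  have T_FF: "T x \<in> ?F" if x: "x \<in> ?F" for x
  proof -
    have "\<forall>ip\<in>?S. T x ip \<ge> 0"
    proof
      fix ip assume ip: "ip \<in> ?S"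
      have "x ip \<ge> 0" using x ip by (auto simp: FF_def)
      then show "T x ip \<ge> 0" using ip dpos[of "fst ip"] gain0[of x "fst ip" "snd ip"] Gsum0[of x "fst ip"]
        by (auto simp: T_def)
    qed
    moreover have "(\<Sum>p\<in>Pth i. T x (i,p)) = d i" if i: "i \<in> I" for i
    proof -
      let ?G = "\<Sum>q\<in>Pth i. gain x i q"
      have "(\<Sum>p\<in>Pth i. T x (i,p)) = (\<Sum>p\<in>Pth i. (x (i,p) + d i * gain x i p) / (1 + ?G))"
        using i by (intro sum.cong) (auto simp: T_def)
      also have "\<dots> = ((\<Sum>p\<in>Pth i. x (i,p)) + d i * ?G) / (1 + ?G)"
        by (simp add: sum_divide_distrib[symmetric] sum.distrib sum_distrib_left)
      also have "\<dots> = (d i + d i * ?G) / (1 + ?G)" using x i by (simp add: FF_def)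
      also have "\<dots> = d i" using Gsum0[of x i]
        by (simp add: field_simps)
      finally show ?thesis .
    qed
    ultimately show ?thesis by (auto simp: FF_def T_def)
  qed
  have psi_cube: "psi x \<in> cube n" if x: "x \<in> ?F" for x
  proof -
    have "0 \<le> x (e k) / d (fst (e k)) \<and> x (e k) / d (fst (e k)) \<le> 1" if k: "k < n" for k
    proof -
      obtain i p where ip: "e k = (i,p)" "i \<in> I" "p \<in> Pth i" using e_in[OF k] by auto
      show ?thesis using FF_le[OF x ip(2,3) fP[OF ip(2)]] dpos[OF ip(2)] ip(1)
        by (simp add: divide_le_eq_1)
    qed
    then show ?thesis by (auto simp: cube_def psi_def)
  qed
  have Phi_psi: "Phi (psi x) = x" if x: "x \<in> ?F" for x
  proof
    fix ip
    show "Phi (psi x) ip = x ip"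
    proof (cases "ip \<in> ?S")
      case False
      have "x ip = 0" using x False unfolding FF_def by blast
      then show ?thesis using False by (simp add: Phi_def)
    next
      case True
      then obtain i p where ip: "ip = (i,p)" "i \<in> I" "p \<in> Pth i" by auto
      have zzq: "zz (psi x) (i,q) = x (i,q) / d i" if "q \<in> Pth i" for q
        using that ip e'_in[of "(i,q)"] ee'[of "(i,q)"] by (simp add: zz_def psi_def)
      have "sz (psi x) i = (\<Sum>q\<in>Pth i. x (i,q) / d i)" unfolding sz_def using zzq by simp
      also have "\<dots> = 1" using x ip dpos[of i] by (simp add: sum_divide_distrib[symmetric] FF_def)
      finally have sz1: "sz (psi x) i = 1" .
      then have "mx (psi x) i = 1" by (simp add: mx_def)
      then show ?thesis using ip sz1 zzq[OF ip(3)] dpos[OF ip(2)] by (simp add: Phi_def)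
    qed
  qed
  have h_cube: "h z \<in> cube n" if "z \<in> cube n" for z
    unfolding h_def using that Phi_FF T_FF psi_cube by blast
  have h_cont: "(\<lambda>k. h (Z k) j) \<longlonglongrightarrow> h z j"
    if Zc: "\<forall>k. Z k \<in> cube n" and zc: "z \<in> cube n" and Zl: "\<forall>i<n. (\<lambda>k. Z k i) \<longlonglongrightarrow> z i" and j: "j < n" for Z z j
  proof -
    have zzc: "(\<lambda>k. zz (Z k) ip) \<longlonglongrightarrow> zz z ip" if "ip \<in> ?S" for ip
      unfolding zz_def using Zl e'_in[OF that] by blast
    have szc: "(\<lambda>k. sz (Z k) i) \<longlonglongrightarrow> sz z i" if "i \<in> I" for i
      unfolding sz_def using that by (intro tendsto_sum zzc) auto
    have mxc: "(\<lambda>k. mx (Z k) i) \<longlonglongrightarrow> mx z i" if "i \<in> I" for i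
      unfolding mx_def using that by (intro tendsto_max tendsto_const szc)
    have mxnz: "mx z i \<noteq> 0" for i using mx1[of z i] by simp
    have Phic: "(\<lambda>k. Phi (Z k) ip) \<longlonglongrightarrow> Phi z ip" for ip
    proof (cases "ip \<in> ?S")
      case True
      then have i: "fst ip \<in> I" by auto
      have eqPhi: "Phi w ip = d (fst ip) * zz w ip / mx w (fst ip) + (if snd ip = p0 (fst ip)
          then d (fst ip) * (1 - sz w (fst ip) / mx w (fst ip)) else 0)" for w
        unfolding Phi_def using True by (simp only: if_P)
      show ?thesis unfolding eqPhi
      proof (cases "snd ip = p0 (fst ip)")
        case True
        show "(\<lambda>k. d (fst ip) * zz (Z k) ip / mx (Z k) (fst ip) + (if snd ip = p0 (fst ip)
          then d (fst ip) * (1 - sz (Z k) (fst ip) / mx (Z k) (fst ip)) else 0)) \<longlonglongrightarrow>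
          d (fst ip) * zz z ip / mx z (fst ip) + (if snd ip = p0 (fst ip)
          then d (fst ip) * (1 - sz z (fst ip) / mx z (fst ip)) else 0)"
          unfolding if_P[OF True]
          by (intro tendsto_intros zzc szc[OF i] mxc[OF i] mxnz \<open>ip \<in> ?S\<close>)
      next
        case False
        show "(\<lambda>k. d (fst ip) * zz (Z k) ip / mx (Z k) (fst ip) + (if snd ip = p0 (fst ip)
          then d (fst ip) * (1 - sz (Z k) (fst ip) / mx (Z k) (fst ip)) else 0)) \<longlonglongrightarrow>
          d (fst ip) * zz z ip / mx z (fst ip) + (if snd ip = p0 (fst ip)
          then d (fst ip) * (1 - sz z (fst ip) / mx z (fst ip)) else 0)"
          unfolding if_not_P[OF False]
          by (intro tendsto_intros zzc szc[OF i] mxc[OF i] mxnz \<open>ip \<in> ?S\<close>)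
      qed
    next
      case False then show ?thesis by (simp add: Phi_def)
    qed
    have PhiT: "(\<lambda>k. Phi (Z k)) \<longlonglongrightarrow> Phi z" by (rule tendsto_fun_pointwise[OF Phic])
    have cc: "(\<lambda>k. c i p (Phi (Z k))) \<longlonglongrightarrow> c i p (Phi z)" if "i \<in> I" "p \<in> Pth i" for i p
      by (rule continuous_on_tendsto_compose[OF cont[OF that] PhiT Phi_FF[OF zc]])
         (use Zc Phi_FF in auto)
    have avgc: "(\<lambda>k. avg (Phi (Z k)) i) \<longlonglongrightarrow> avg (Phi z) i" if i: "i \<in> I" for i
      unfolding avg_def using dpos[OF i] by (intro tendsto_intros Phic cc i) auto
    have gainc: "(\<lambda>k. gain (Phi (Z k)) i p) \<longlonglongrightarrow> gain (Phi z) i p" if "i \<in> I" "p \<in> Pth i" for i p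
      unfolding gain_def by (intro tendsto_intros avgc cc that)
    have Gnz: "1 + (\<Sum>q\<in>Pth i. gain x i q) \<noteq> 0" for x i using Gsum0[of x i] by linarith
    have Tc: "(\<lambda>k. T (Phi (Z k)) ip) \<longlonglongrightarrow> T (Phi z) ip" if ip: "ip \<in> ?S" for ip
    proof -
      have i: "fst ip \<in> I" "snd ip \<in> Pth (fst ip)" using ip by auto
      have eqT: "T w ip = (w ip + d (fst ip) * gain w (fst ip) (snd ip))
        / (1 + (\<Sum>q\<in>Pth (fst ip). gain w (fst ip) q))" for w
        unfolding T_def using ip by (simp only: if_P)
      show ?thesis unfolding eqT
        by (intro tendsto_intros Phic gainc[OF i] Gnz) (auto intro: gainc i)
    qed
    have eqh: "psi w j = w (e j) / d (fst (e j))" for w unfolding psi_def using j by simp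
    show ?thesis unfolding h_def eqh
      by (intro tendsto_intros Tc e_in[OF j]) (use dpos[of "fst (e j)"] e_in[OF j] in auto)
  qed
  obtain z where z: "z \<in> cube n" "h z = z"
    using brouwer_cube_nat[of n h] h_cube h_cont by blast
  define x where "x = Phi z"
  have xF: "x \<in> ?F" unfolding x_def using Phi_FF z(1) by blast
  have "T x = Phi (psi (T x))" using Phi_psi[OF T_FF[OF xF]] by simp
  also have "psi (T x) = z" using z(2) unfolding h_def x_def by simp
  finally have Tx: "T x = x" unfolding x_def by simp
  have "\<forall>i\<in>I. \<forall>p\<in>Pth i. x (i,p) > 0 \<longrightarrow> (\<forall>q\<in>Pth i. c i p x \<le> c i q x)"
  proof (intro ballI impI)
    fix i p q assume i: "i \<in> I" and p: "p \<in> Pth i" and xp: "x (i,p) > 0" and q: "q \<in> Pth i"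
    show "c i p x \<le> c i q x"
    proof (rule wardrop_fixpoint[where Pth=Pth and i=i and d=d and x=x and c=c and p=p and q=q, OF fP[OF i] dpos[OF i] _ _ _ p xp q])
      show "(\<Sum>p\<in>Pth i. x (i,p)) = d i" using xF i by (simp add: FF_def)
      show "x (i,r) \<ge> 0" if "r \<in> Pth i" for r using xF i that by (simp add: FF_def)
      show "x (i,r) = (x (i,r) + d i * max 0 ((\<Sum>q\<in>Pth i. x (i,q) * c i q x) / d i - c i r x))
        / (1 + (\<Sum>q\<in>Pth i. max 0 ((\<Sum>q'\<in>Pth i. x (i,q') * c i q' x) / d i - c i q x)))"
        if r: "r \<in> Pth i" for r
      proof -
        have "x (i,r) = T x (i,r)" using Tx by simp
        then show ?thesis using i r by (simp add: T_def gain_def avg_def)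
      qed
    qed
  qed
  then show ?thesis using xF by blast
qed


lemma compact_box_fun:
  fixes A :: "'a set" and C :: real
  shows "compact {x :: 'a \<Rightarrow> real. (\<forall>a. a \<notin> A \<longrightarrow> x a = 0) \<and> (\<forall>a\<in>A. 0 \<le> x a \<and> x a \<le> C)}"
proof -
  define S where "S a = (if a \<in> A then {0..C} else {0::real})" for a
  have eq: "{x :: 'a \<Rightarrow> real. (\<forall>a. a \<notin> A \<longrightarrow> x a = 0) \<and> (\<forall>a\<in>A. 0 \<le> x a \<and> x a \<le> C)} = PiE UNIV S"
    by (auto simp: S_def PiE_iff) (metis atLeastAtMost_iff singletonD)+
  have "compactin (product_topology (\<lambda>_. euclidean) UNIV) (PiE UNIV S)"
    unfolding compactin_PiE by (auto simp: S_def compactin_euclidean_iff)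
  then show ?thesis unfolding eq euclidean_product_topology compactin_euclidean_iff .
qed

lemma cont_coord [continuous_intros]: "continuous_on S (\<lambda>x. x a :: real)"
  by (rule continuous_on_subset[OF continuous_on_product_coordinates]) simp

lemma compact_FF:
  assumes fI: "finite I" and fP: "\<And>i. i \<in> I \<Longrightarrow> finite (Pth i)"
  shows "compact (FF I Pth d)"
proof -
  define C where "C = Max (insert 0 (d ` I))"
  have dC: "i \<in> I \<Longrightarrow> d i \<le> C" for i unfolding C_def using fI by (intro Max_ge) auto
  have eq: "FF I Pth d = {x. (\<forall>a. a \<notin> Sigma I Pth \<longrightarrow> x a = 0) \<and> (\<forall>a\<in>Sigma I Pth. 0 \<le> x a \<and> x a \<le> C)}
     \<inter> (\<Inter>i\<in>I. {x. (\<Sum>p\<in>Pth i. x (i,p)) = d i})" (is "_ = ?B \<inter> ?E")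
  proof
    show "FF I Pth d \<subseteq> ?B \<inter> ?E"
    proof
      fix x assume x: "x \<in> FF I Pth d"
      have "\<forall>a\<in>Sigma I Pth. 0 \<le> x a \<and> x a \<le> C"
        using FF_le[OF x] fP dC by force
      then show "x \<in> ?B \<inter> ?E" using x unfolding FF_def by blast
    qed
    show "?B \<inter> ?E \<subseteq> FF I Pth d" unfolding FF_def by blast
  qed
  have "closed ?E"
    by (intro closed_INT ballI closed_Collect_eq continuous_intros)
  then show ?thesis unfolding eq by (intro compact_Int_closed compact_box_fun)
qed

lemma gordan:
  fixes w :: "'k \<Rightarrow> 'j \<Rightarrow> real"
  assumes fK: "finite K" and fJ: "finite J"
  shows "(\<exists>lam. \<forall>k\<in>K. (\<Sum>j\<in>J. lam j * w k j) > 0) \<or>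
         (\<exists>\<mu>. (\<forall>k\<in>K. \<mu> k \<ge> 0) \<and> (\<Sum>k\<in>K. \<mu> k) = 1 \<and> (\<forall>j\<in>J. (\<Sum>k\<in>K. \<mu> k * w k j) = 0))"
proof (cases "K = {}")
  case True then show ?thesis by auto
next
  case False
  then obtain k0 where k0: "k0 \<in> K" by auto
  define D where "D = {\<mu> :: 'k \<Rightarrow> real. (\<forall>k. k \<notin> K \<longrightarrow> \<mu> k = 0) \<and> (\<forall>k\<in>K. 0 \<le> \<mu> k \<and> \<mu> k \<le> 1)}
     \<inter> {\<mu>. (\<Sum>k\<in>K. \<mu> k) = 1}"
  have ifz: "\<And>P a b. (if P then a else 0) * b = (if P then a * b else (0::real))" by simp
  define f where "f \<mu> = (\<Sum>j\<in>J. (\<Sum>k\<in>K. \<mu> k * w k j)^2)" for \<mu>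
  have cD: "compact D" unfolding D_def
    by (intro compact_Int_closed compact_box_fun closed_Collect_eq continuous_intros)
  have "(\<lambda>k. if k = k0 then 1 else 0) \<in> D" using k0 fK by (auto simp: D_def)
  then have neD: "D \<noteq> {}" by blast
  have cf: "continuous_on D f" unfolding f_def by (intro continuous_intros)
  obtain m where m: "m \<in> D" "\<And>\<mu>. \<mu> \<in> D \<Longrightarrow> f m \<le> f \<mu>"
    using continuous_attains_inf[OF cD neD cf] by blast
  define y where "y j = (\<Sum>k\<in>K. m k * w k j)" for j
  show ?thesis
  proof (cases "\<forall>j\<in>J. y j = 0")
    case True
    then show ?thesis using m(1) unfolding D_def y_def by blast
  next
    case False
    then obtain j0 where j0: "j0 \<in> J" "y j0 \<noteq> 0" by blast
    have ypos: "(\<Sum>j\<in>J. (y j)^2) > 0"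
      by (rule sum_pos2[OF fJ j0(1)]) (use j0 in auto)
    have "\<forall>k\<in>K. (\<Sum>j\<in>J. y j * w k j) > 0"
    proof
      fix k assume k: "k \<in> K"
      define a where "a = (\<Sum>j\<in>J. y j * (w k j - y j))"
      define b where "b = (\<Sum>j\<in>J. (w k j - y j)^2)"
      have b0: "b \<ge> 0" unfolding b_def by (intro sum_nonneg) auto
      have ineq: "0 \<le> 2 * t * a + t^2 * b" if t: "0 < t" "t \<le> 1" for t
      proof -
        define mt where "mt k' = (1 - t) * m k' + (if k' = k then t else 0)" for k'
        have mtD: "mt \<in> D"
        proof -
          have "(\<Sum>k'\<in>K. mt k') = (1 - t) * (\<Sum>k'\<in>K. m k') + t"
            unfolding mt_def using fK k by (simp add: sum.distrib sum_distrib_left[symmetric])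
          also have "\<dots> = 1" using m(1) by (simp add: D_def)
          finally have s: "(\<Sum>k'\<in>K. mt k') = 1" .
          have "0 \<le> mt k' \<and> mt k' \<le> 1" if "k' \<in> K" for k'
          proof -
            have "0 \<le> m k'" "m k' \<le> 1" using m(1) that by (auto simp: D_def)
            then show ?thesis using t unfolding mt_def
              by (auto intro!: add_nonneg_nonneg mult_nonneg_nonneg)
                 (smt (verit, ccfv_SIG) mult_left_le mult_right_le_one_le)+
          qed
          moreover have "mt k' = 0" if "k' \<notin> K" for k'
            using m(1) that k unfolding mt_def D_def by auto
          ultimately show ?thesis using s unfolding D_def by blast
        qed
        have mtsum: "(\<Sum>k'\<in>K. mt k' * w k' j) = y j + t * (w k j - y j)" for j
        proof -
          have "(\<Sum>k'\<in>K. mt k' * w k' j) = (1 - t) * y j + t * w k j"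
            unfolding mt_def y_def using fK k
            by (simp add: distrib_right sum.distrib sum_distrib_left[symmetric] mult.assoc ifz)
          then show ?thesis by (simp add: algebra_simps)
        qed
        have "(\<Sum>j\<in>J. (y j)^2) = f m" unfolding f_def y_def by simp
        also have "\<dots> \<le> f mt" by (rule m(2)[OF mtD])
        also have "f mt = (\<Sum>j\<in>J. (y j)^2 + 2 * t * (y j * (w k j - y j)) + t^2 * (w k j - y j)^2)"
          unfolding f_def mtsum by (intro sum.cong) (auto simp: power2_eq_square algebra_simps)
        also have "\<dots> = (\<Sum>j\<in>J. (y j)^2) + 2 * t * a + t^2 * b"
          by (simp add: a_def b_def sum.distrib sum_distrib_left)
        finally show ?thesis by simp
      qed
      have a0: "a \<ge> 0"
      proof (rule ccontr)
        assume "\<not> a \<ge> 0"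
        then have an: "a < 0" by simp
        define t where "t = min 1 (- a / (b + 1))"
        have tpos: "0 < t" "t \<le> 1" using an b0 by (auto simp: t_def divide_neg_pos)
        have "t * b \<le> (- a / (b + 1)) * b" using b0 by (intro mult_right_mono) (auto simp: t_def)
        also have "\<dots> < - a"
        proof -
          have "(- a / (b + 1)) * b = - a * (b / (b + 1))" by simp
          also have "\<dots> < - a * 1" using an b0 by (intro mult_strict_left_mono) auto
          finally show ?thesis by simp
        qed
        finally have "2 * a + t * b < 0" using an by simp
        then have "t * (2 * a + t * b) < 0" using tpos by (simp add: mult_pos_neg)
        moreover have "t * (2 * a + t * b) = 2 * t * a + t^2 * b" by (simp add: power2_eq_square algebra_simps)
        ultimately show False using ineq[OF tpos] by simp
      qed
      have "(\<Sum>j\<in>J. y j * w k j) = a + (\<Sum>j\<in>J. (y j)^2)"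
        unfolding a_def by (simp add: sum.distrib[symmetric] power2_eq_square algebra_simps)
      then show "(\<Sum>j\<in>J. y j * w k j) > 0" using a0 ypos by simp
    qed
    then show ?thesis by blast
  qed
qed


lemma perturb:
  fixes x :: "'i \<times> 'p \<Rightarrow> real"
  assumes x: "x \<in> FF I Pth d" and fP: "\<And>i. i \<in> I \<Longrightarrow> finite (Pth i)"
    and src: "\<And>i. i \<in> I \<Longrightarrow> src i \<in> Pth i"
    and m0: "\<And>i q. i \<in> I \<Longrightarrow> q \<in> Pth i \<Longrightarrow> m (i,q) \<ge> 0"
    and msrc: "\<And>i. i \<in> I \<Longrightarrow> m (i, src i) = 0"
    and mle: "\<And>i. i \<in> I \<Longrightarrow> (\<Sum>q\<in>Pth i. m (i,q)) \<le> x (i, src i)"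
  defines "x' \<equiv> (\<lambda>ip. if ip \<in> Sigma I Pth then x ip + m ip
      - (if snd ip = src (fst ip) then (\<Sum>q\<in>Pth (fst ip). m (fst ip, q)) else 0) else 0)"
  shows "x' \<in> FF I Pth d"
    and "(\<Sum>i\<in>I. \<Sum>q\<in>Pth i. a i q * x' (i,q)) = (\<Sum>i\<in>I. \<Sum>q\<in>Pth i. a i q * x (i,q))
          + (\<Sum>i\<in>I. \<Sum>q\<in>Pth i. m (i,q) * (a i q - a i (src i)))"
proof -
  define M where "M i = (\<Sum>q\<in>Pth i. m (i,q))" for i
  have x'eq: "x' (i,q) = x (i,q) + m (i,q) - (if q = src i then M i else 0)" if "i \<in> I" "q \<in> Pth i" for i q
    using that by (simp add: x'_def M_def)
  have xnn: "x (i,q) \<ge> 0" if "i \<in> I" "q \<in> Pth i" for i q using x that by (simp add: FF_def)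
  show "x' \<in> FF I Pth d"
    unfolding FF_def
  proof (intro CollectI conjI allI impI ballI)
    fix ip assume "ip \<notin> Sigma I Pth" then show "x' ip = 0" by (simp add: x'_def)
  next
    fix ip assume ip: "ip \<in> Sigma I Pth"
    then obtain i q where iq: "ip = (i,q)" "i \<in> I" "q \<in> Pth i" by auto
    show "0 \<le> x' ip"
    proof (cases "q = src i")
      case True
      then show ?thesis using iq x'eq[OF iq(2,3)] mle[OF iq(2)] msrc[OF iq(2)] by (simp add: M_def)
    next
      case False
      then show ?thesis using iq x'eq[OF iq(2,3)] m0[OF iq(2,3)] xnn[OF iq(2,3)] by simp
    qed
  next
    fix i assume i: "i \<in> I"
    have "(\<Sum>q\<in>Pth i. x' (i,q)) = (\<Sum>q\<in>Pth i. x (i,q) + m (i,q) - (if q = src i then M i else 0))"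
      using x'eq i by (intro sum.cong) auto
    also have "\<dots> = (\<Sum>q\<in>Pth i. x (i,q)) + M i - M i"
      using fP[OF i] src[OF i] by (simp add: sum.distrib sum_subtractf M_def)
    also have "\<dots> = d i" using x i by (simp add: FF_def)
    finally show "(\<Sum>q\<in>Pth i. x' (i,q)) = d i" .
  qed
  have per: "(\<Sum>q\<in>Pth i. a i q * x' (i,q)) = (\<Sum>q\<in>Pth i. a i q * x (i,q)) + (\<Sum>q\<in>Pth i. m (i,q) * (a i q - a i (src i)))"
    if i: "i \<in> I" for i
  proof -
    have "(\<Sum>q\<in>Pth i. a i q * x' (i,q)) = (\<Sum>q\<in>Pth i. a i q * x (i,q) + a i q * m (i,q) - (if q = src i then a i q * M i else 0))"
    proof (intro sum.cong refl)
      fix q assume q: "q \<in> Pth i"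
      show "a i q * x' (i,q) = a i q * x (i,q) + a i q * m (i,q) - (if q = src i then a i q * M i else 0)"
        unfolding x'eq[OF i q] by (simp add: algebra_simps)
    qed
    also have "\<dots> = (\<Sum>q\<in>Pth i. a i q * x (i,q)) + (\<Sum>q\<in>Pth i. a i q * m (i,q)) - a i (src i) * M i"
      using fP[OF i] src[OF i] by (simp add: sum.distrib sum_subtractf)
    also have "\<dots> = (\<Sum>q\<in>Pth i. a i q * x (i,q)) + (\<Sum>q\<in>Pth i. m (i,q) * (a i q - a i (src i)))"
      by (simp add: M_def algebra_simps sum_subtractf sum_distrib_left)
    finally show ?thesis .
  qed
  show "(\<Sum>i\<in>I. \<Sum>q\<in>Pth i. a i q * x' (i,q)) = (\<Sum>i\<in>I. \<Sum>q\<in>Pth i. a i q * x (i,q))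
          + (\<Sum>i\<in>I. \<Sum>q\<in>Pth i. m (i,q) * (a i q - a i (src i)))"
    using per by (simp add: sum.distrib)
qed

lemma sum_sigma_delta:
  fixes c :: real
  assumes "finite I" "\<And>i. i \<in> I \<Longrightarrow> finite (P i)" "i0 \<in> I" "p0 \<in> P i0"
  shows "(\<Sum>i\<in>I. \<Sum>q\<in>P i. (if (i,q) = (i0,p0) then c else 0) * f i q) = c * f i0 p0"
proof -
  have "(\<Sum>q\<in>P i. (if (i,q) = (i0,p0) then c else 0) * f i q) = (if i = i0 then c * f i0 p0 else 0)" if "i \<in> I" for i
  proof (cases "i = i0")
    case True
    then have "(\<Sum>q\<in>P i. (if (i,q) = (i0,p0) then c else 0) * f i q) = (\<Sum>q\<in>P i0. (if q = p0 then c * f i0 q else 0))"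
      by (intro sum.cong) (auto split: if_splits)
    also have "\<dots> = c * f i0 p0" using assms by (simp add: sum.delta')
    finally show ?thesis using True by simp
  qed simp
  then have "(\<Sum>i\<in>I. \<Sum>q\<in>P i. (if (i,q) = (i0,p0) then c else 0) * f i q) = (\<Sum>i\<in>I. (if i = i0 then c * f i0 p0 else 0))"
    by (intro sum.cong) auto
  also have "\<dots> = c * f i0 p0" using assms by simp
  finally show ?thesis .
qed

lemma used_eq:
  assumes u: "u \<in> FF I Pth d" and fP: "\<And>i. i \<in> I \<Longrightarrow> finite (Pth i)"
    and used: "\<And>i p. i \<in> I \<Longrightarrow> p \<in> Pth i \<Longrightarrow> u (i,p) > 0 \<Longrightarrow> gc i p = v i"
  shows "(\<Sum>i\<in>I. \<Sum>p\<in>Pth i. gc i p * u (i,p)) = (\<Sum>i\<in>I. v i * d i)"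
proof (intro sum.cong refl)
  fix i assume i: "i \<in> I"
  have "(\<Sum>p\<in>Pth i. gc i p * u (i,p)) = (\<Sum>p\<in>Pth i. v i * u (i,p))"
  proof (intro sum.cong refl)
    fix p assume p: "p \<in> Pth i"
    show "gc i p * u (i,p) = v i * u (i,p)"
    proof (cases "u (i,p) > 0")
      case True then show ?thesis using used[OF i p] by simp
    next
      case False
      moreover have "u (i,p) \<ge> 0" using u i p by (simp add: FF_def)
      ultimately have "u (i,p) = 0" by simp
      then show ?thesis by simp
    qed
  qed
  also have "\<dots> = v i * d i" using u i by (simp add: sum_distrib_left[symmetric] FF_def)
  finally show "(\<Sum>p\<in>Pth i. gc i p * u (i,p)) = v i * d i" .
qed


lemma perturb_ex:
  fixes x :: "'i \<times> 'p \<Rightarrow> real"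
  assumes a1: "x \<in> FF I Pth d" and a2: "\<And>i. i \<in> I \<Longrightarrow> finite (Pth i)"
    and a3: "\<And>i. i \<in> I \<Longrightarrow> src i \<in> Pth i"
    and a4: "\<And>i q. i \<in> I \<Longrightarrow> q \<in> Pth i \<Longrightarrow> m (i,q) \<ge> 0"
    and a5: "\<And>i. i \<in> I \<Longrightarrow> m (i, src i) = 0"
    and a6: "\<And>i. i \<in> I \<Longrightarrow> (\<Sum>q\<in>Pth i. m (i,q)) \<le> x (i, src i)"
  shows "\<exists>x'\<in>FF I Pth d. \<forall>a. (\<Sum>i\<in>I. \<Sum>q\<in>Pth i. a i q * x' (i,q)) = (\<Sum>i\<in>I. \<Sum>q\<in>Pth i. a i q * x (i,q))
          + (\<Sum>i\<in>I. \<Sum>q\<in>Pth i. m (i,q) * (a i q - a i (src i)))"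
proof -
  define x' where "x' = (\<lambda>ip. if ip \<in> Sigma I Pth then x ip + m ip
      - (if snd ip = src (fst ip) then (\<Sum>q\<in>Pth (fst ip). m (fst ip, q)) else 0) else 0)"
  have mem: "x' \<in> FF I Pth d" unfolding x'_def
    by (rule perturb(1)[where x=x and I=I and Pth=Pth and d=d and src=src and m=m, OF a1 a2 a3 a4 a5 a6])
  have all: "\<forall>a. (\<Sum>i\<in>I. \<Sum>q\<in>Pth i. a i q * x' (i,q)) = (\<Sum>i\<in>I. \<Sum>q\<in>Pth i. a i q * x (i,q))
          + (\<Sum>i\<in>I. \<Sum>q\<in>Pth i. m (i,q) * (a i q - a i (src i)))"
  proof
    fix a
    show "(\<Sum>i\<in>I. \<Sum>q\<in>Pth i. a i q * x' (i,q)) = (\<Sum>i\<in>I. \<Sum>q\<in>Pth i. a i q * x (i,q))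
          + (\<Sum>i\<in>I. \<Sum>q\<in>Pth i. m (i,q) * (a i q - a i (src i)))"
      unfolding x'_def
      by (rule perturb(2)[where x=x and I=I and Pth=Pth and d=d and src=src and m=m, OF a1 a2 a3 a4 a5 a6])
  qed
  show ?thesis using mem all by blast
qed

theorem theorem3p4:
  fixes V :: "'v set" and E :: "('v \<times> 'v) set"
    and I :: "'i set" and s t :: "'i \<Rightarrow> 'v" and d :: "'i \<Rightarrow> real"
    and J :: "'j set"
    and \<tau> :: "'i \<Rightarrow> 'v list \<Rightarrow> ('i \<times> 'v list \<Rightarrow> real) \<Rightarrow> real"
    and g :: "'i \<Rightarrow> 'v list \<Rightarrow> 'j \<Rightarrow> ('i \<times> 'v list \<Rightarrow> real) \<Rightarrow> real"
    and B :: "'j \<Rightarrow> real"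
  assumes "finite V" and "E \<subseteq> V \<times> V"
    and "finite I" and "\<forall>i\<in>I. s i \<in> V \<and> t i \<in> V" and "\<forall>i\<in>I. d i > 0"
    and "finite J"
    and g_nonneg: "\<forall>i\<in>I. \<forall>p\<in>paths V E s t i. \<forall>j\<in>J. \<forall>x\<in>feasible_flows V E s t I d. g i p j x \<ge> 0"
    and tau_cont: "\<forall>i\<in>I. \<forall>p\<in>paths V E s t i. continuous_on (feasible_flows V E s t I d) (\<tau> i p)"
    and g_const: "\<forall>i\<in>I. \<forall>p\<in>paths V E s t i. \<forall>j\<in>J. \<exists>c. \<forall>x\<in>feasible_flows V E s t I d. g i p j x = c"
    and "extremal V E s t I d J g B"
    and "pareto_minimal V E s t I d J g B"
  shows "\<exists>lam :: 'j \<Rightarrow> real. (\<forall>j\<in>J. lam j > 0) \<and> WE V E s t I d J \<tau> g lam \<noteq> {} \<and>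
           (\<forall>u\<in>WE V E s t I d J \<tau> g lam. \<forall>j\<in>J. Gext V E s t I g j u \<le> B j)"
proof -
  let ?Pth = "paths V E s t"
  let ?F = "feasible_flows V E s t I d"
  let ?FF = "FF I ?Pth d"
  have fI: "finite I" and fJ: "finite J" by fact+
  have dpos: "\<And>i. i \<in> I \<Longrightarrow> d i > 0" using assms(5) by blast
  have Pidx_eq: "Pidx V E s t I = Sigma I ?Pth" by (auto simp: Pidx_def)
  have F_eq: "?F = ?FF" unfolding feasible_flows_def FF_def Pidx_eq by simp
  have fP: "finite (?Pth i)" for i
  proof -
    have "?Pth i \<subseteq> {xs. set xs \<subseteq> V \<and> distinct xs}" by (auto simp: paths_def simple_path_def)
    then show ?thesis using finite_subset_distinct[OF \<open>finite V\<close>] finite_subset by blast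
  qed
  have fP': "\<And>i. i \<in> I \<Longrightarrow> finite (?Pth i)" using fP by blast
  have fS: "finite (Sigma I ?Pth)" using fI fP by auto
  have ext_contra: False if "feasible_budget V E s t I d J g B1" "feasible_budget V E s t I d J g B2"
    "B1 \<noteq> B2" "0 < \<theta>" "\<theta> < 1" "B = (\<lambda>j. \<theta> * B1 j + (1 - \<theta>) * B2 j)" for B1 B2 \<theta>
    using assms(10) that unfolding extremal_def by blast
  have par_contra: False if "feasible_budget V E s t I d J g B'" "B' \<noteq> B" "\<forall>j\<in>J. B' j \<le> B j" for B'
    using assms(11) that unfolding pareto_minimal_def by blast
  have fbB: "feasible_budget V E s t I d J g B" using assms(10) by (simp add: extremal_def)
  then obtain x0 where x0F: "x0 \<in> ?F" and x0B: "\<forall>j\<in>J. Gext V E s t I g j x0 \<le> B j"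
    and Bout: "\<forall>j. j \<notin> J \<longrightarrow> B j = 0"
    unfolding feasible_budget_def by blast
  have x0FF: "x0 \<in> ?FF" using x0F F_eq by simp
  have x0nn: "x0 (i,q) \<ge> 0" if "i \<in> I" "q \<in> ?Pth i" for i q using x0FF that by (simp add: FF_def)
  define gc where "gc i p j = g i p j x0" for i p j
  have gconst: "g i p j x = gc i p j" if h: "x \<in> ?F" "i \<in> I" "p \<in> ?Pth i" "j \<in> J" for x i p j
  proof -
    obtain c where "\<forall>x\<in>?F. g i p j x = c" using g_const h(2-4) by blast
    then show ?thesis using h(1) x0F unfolding gc_def by simp
  qed
  have gc0: "gc i p j \<ge> 0" if "i \<in> I" "p \<in> ?Pth i" "j \<in> J" for i p j
    using g_nonneg that x0F unfolding gc_def by blast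
  define Gs where "Gs x j = (\<Sum>i\<in>I. \<Sum>p\<in>?Pth i. gc i p j * x (i,p))" for x j
  have Gext_eq: "Gext V E s t I g j x = Gs x j" if "x \<in> ?F" "j \<in> J" for x j
  proof -
    have "Gext V E s t I g j x = (\<Sum>(i,p)\<in>Sigma I ?Pth. g i p j x * x (i,p))" by (simp add: Gext_def Pidx_eq)
    also have "\<dots> = (\<Sum>i\<in>I. \<Sum>p\<in>?Pth i. g i p j x * x (i,p))" using fI fP by (simp add: sum.Sigma)
    also have "\<dots> = Gs x j" unfolding Gs_def using gconst that by (intro sum.cong refl) auto
    finally show ?thesis .
  qed
  have Gs0: "Gs x j \<ge> 0" if "x \<in> ?FF" "j \<in> J" for x j
    unfolding Gs_def using that gc0 by (intro sum_nonneg mult_nonneg_nonneg) (auto simp: FF_def)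
  define Bv where "Bv x = (\<lambda>j. if j \<in> J then Gs x j else 0)" for x
  have fbBv: "feasible_budget V E s t I d J g (Bv x)" if xx: "x \<in> ?FF" for x
  proof -
    have xF: "x \<in> ?F" using xx F_eq by simp
    show ?thesis unfolding feasible_budget_def using xF Gs0[OF xx] Gext_eq[OF xF]
      by (auto simp: Bv_def intro!: bexI[of _ x])
  qed
  have B_eq: "B = Bv x0"
  proof (rule ccontr)
    assume "B \<noteq> Bv x0"
    moreover have "\<forall>j\<in>J. Bv x0 j \<le> B j" using x0B Gext_eq[OF x0F] by (simp add: Bv_def)
    ultimately show False using par_contra fbBv[OF x0FF] by metis
  qed
  have BJ: "B j = Gs x0 j" if "j \<in> J" for j using B_eq that by (simp add: Bv_def)
  have ne: "?Pth i \<noteq> {}" if i: "i \<in> I" for i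
    using x0FF i dpos[OF i] by (auto simp: FF_def)
  have srcex: "\<exists>p. p \<in> ?Pth i \<and> x0 (i,p) > 0" if i: "i \<in> I" for i
  proof (rule ccontr)
    assume "\<not> ?thesis"
    then have "\<forall>p\<in>?Pth i. x0 (i,p) \<le> 0" by auto
    then have "(\<Sum>p\<in>?Pth i. x0 (i,p)) \<le> 0" by (intro sum_nonpos) auto
    then show False using x0FF i dpos[OF i] by (auto simp: FF_def)
  qed
  define src where "src i = (SOME p. p \<in> ?Pth i \<and> x0 (i,p) > 0)" for i
  have src: "src i \<in> ?Pth i" "x0 (i, src i) > 0" if "i \<in> I" for i
    using someI_ex[OF srcex[OF that]] unfolding src_def by auto
  define v where "v i j = gc i (src i) j" for i j
  have pert: "\<exists>x'\<in>?FF. \<forall>j. Gs x' j = Gs x0 j + (\<Sum>i\<in>I. \<Sum>q\<in>?Pth i. m (i,q) * (gc i q j - gc i (sr i) j))"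
    if h: "\<And>i. i \<in> I \<Longrightarrow> sr i \<in> ?Pth i" "\<And>i q. i \<in> I \<Longrightarrow> q \<in> ?Pth i \<Longrightarrow> m (i,q) \<ge> 0"
       "\<And>i. i \<in> I \<Longrightarrow> m (i, sr i) = 0" "\<And>i. i \<in> I \<Longrightarrow> (\<Sum>q\<in>?Pth i. m (i,q)) \<le> x0 (i, sr i)" for sr m
  proof -
    obtain x' where x': "x' \<in> ?FF" "\<forall>a. (\<Sum>i\<in>I. \<Sum>q\<in>?Pth i. a i q * x' (i,q)) = (\<Sum>i\<in>I. \<Sum>q\<in>?Pth i. a i q * x0 (i,q))
          + (\<Sum>i\<in>I. \<Sum>q\<in>?Pth i. m (i,q) * (a i q - a i (sr i)))"
      using perturb_ex[where I=I and Pth="?Pth" and d=d and x=x0 and src=sr and m=m, OF x0FF fP' h(1) h(2) h(3) h(4)] by blast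
    have "Gs x' j = Gs x0 j + (\<Sum>i\<in>I. \<Sum>q\<in>?Pth i. m (i,q) * (gc i q j - gc i (sr i) j))" for j
      unfolding Gs_def using spec[OF x'(2), of "\<lambda>i q. gc i q j"] by simp
    then show ?thesis using x'(1) by blast
  qed
  have claim: "gc i p j = v i j" if i: "i \<in> I" and p: "p \<in> ?Pth i" and pos: "x0 (i,p) > 0" and j: "j \<in> J" for i p j
  proof (rule ccontr)
    assume neq: "gc i p j \<noteq> v i j"
    then have pne: "p \<noteq> src i" by (auto simp: v_def)
    define \<epsilon> where "\<epsilon> = min (x0 (i,p)) (x0 (i, src i))"
    have \<epsilon>: "\<epsilon> > 0" "\<epsilon> \<le> x0 (i,p)" "\<epsilon> \<le> x0 (i,src i)" using pos src[OF i] by (auto simp: \<epsilon>_def)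
    define m1 where "m1 = (\<lambda>ip. if ip = (i,p) then \<epsilon> else 0)"
    have m1sum: "(\<Sum>q\<in>?Pth i'. m1 (i',q)) = (if i' = i then \<epsilon> else 0)" for i'
      using fP p by (cases "i' = i") (auto simp: m1_def sum.delta')
    obtain x1 where x1: "x1 \<in> ?FF" "\<And>j. Gs x1 j = Gs x0 j + (\<Sum>i'\<in>I. \<Sum>q\<in>?Pth i'. m1 (i',q) * (gc i' q j - gc i' (src i') j))"
    proof -
      have "\<exists>x'\<in>?FF. \<forall>j. Gs x' j = Gs x0 j + (\<Sum>i'\<in>I. \<Sum>q\<in>?Pth i'. m1 (i',q) * (gc i' q j - gc i' (src i') j))"
      proof (rule pert)
        show "src i' \<in> ?Pth i'" if "i' \<in> I" for i' using src that by blast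
        show "m1 (i',q) \<ge> 0" for i' q using \<epsilon> by (simp add: m1_def)
        show "m1 (i', src i') = 0" for i' using pne by (auto simp: m1_def)
        show "(\<Sum>q\<in>?Pth i'. m1 (i',q)) \<le> x0 (i', src i')" if "i' \<in> I" for i'
          using m1sum \<epsilon> x0nn[OF that src(1)[OF that]] by auto
      qed
      then show ?thesis using that by blast
    qed
    have G1: "Gs x1 j' = Gs x0 j' + \<epsilon> * (gc i p j' - v i j')" for j'
      using sum_sigma_delta[where I=I and P="?Pth" and c=\<epsilon> and f="\<lambda>i' q. gc i' q j' - gc i' (src i') j'", OF fI fP' i p]
      unfolding x1(2) m1_def v_def by simp
    define src2 where "src2 = src(i := p)"
    define m2 where "m2 = (\<lambda>ip. if ip = (i, src i) then \<epsilon> else 0)"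
    have m2sum: "(\<Sum>q\<in>?Pth i'. m2 (i',q)) = (if i' = i then \<epsilon> else 0)" for i'
      using fP src[OF i] by (cases "i' = i") (auto simp: m2_def sum.delta')
    obtain x2 where x2: "x2 \<in> ?FF" "\<And>j. Gs x2 j = Gs x0 j + (\<Sum>i'\<in>I. \<Sum>q\<in>?Pth i'. m2 (i',q) * (gc i' q j - gc i' (src2 i') j))"
    proof -
      have "\<exists>x'\<in>?FF. \<forall>j. Gs x' j = Gs x0 j + (\<Sum>i'\<in>I. \<Sum>q\<in>?Pth i'. m2 (i',q) * (gc i' q j - gc i' (src2 i') j))"
      proof (rule pert)
        show "src2 i' \<in> ?Pth i'" if "i' \<in> I" for i' using src that p by (auto simp: src2_def)
        show "m2 (i',q) \<ge> 0" for i' q using \<epsilon> by (simp add: m2_def)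
        show "m2 (i', src2 i') = 0" for i' using pne by (auto simp: m2_def src2_def)
        show "(\<Sum>q\<in>?Pth i'. m2 (i',q)) \<le> x0 (i', src2 i')" if "i' \<in> I" for i'
          using m2sum \<epsilon> x0nn[OF that src(1)[OF that]] by (auto simp: src2_def)
      qed
      then show ?thesis using that by blast
    qed
    have G2: "Gs x2 j' = Gs x0 j' + \<epsilon> * (v i j' - gc i p j')" for j'
      using sum_sigma_delta[where I=I and P="?Pth" and c=\<epsilon> and f="\<lambda>i' q. gc i' q j' - gc i' (src2 i') j'", OF fI fP' i src(1)[OF i]]
      unfolding x2(2) m2_def v_def by (simp add: src2_def)
    show False
    proof (rule ext_contra[OF fbBv[OF x1(1)] fbBv[OF x2(1)], of "1/2"])
      show "Bv x1 \<noteq> Bv x2"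
      proof
        assume "Bv x1 = Bv x2"
        then have "Bv x1 j = Bv x2 j" by simp
        then have "\<epsilon> * (gc i p j - v i j) = \<epsilon> * (v i j - gc i p j)" using j G1 G2 by (simp add: Bv_def)
        then show False using \<epsilon>(1) neq by simp
      qed
      show "B = (\<lambda>j. 1/2 * Bv x1 j + (1 - 1/2) * Bv x2 j)"
      proof
        fix j' show "B j' = 1/2 * Bv x1 j' + (1 - 1/2) * Bv x2 j'"
          using BJ Bout by (cases "j' \<in> J") (auto simp: Bv_def G1 G2 algebra_simps)
      qed
    qed auto
  qed
  define K where "K = {iq \<in> Sigma I ?Pth. \<exists>j\<in>J. gc (fst iq) (snd iq) j \<noteq> v (fst iq) j}"
  have fK: "finite K" unfolding K_def using fS by simp
  have KS: "K \<subseteq> Sigma I ?Pth" unfolding K_def by blast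
  have srcK: "(i, src i) \<notin> K" for i by (auto simp: K_def v_def)
  define w :: "('i \<times> 'v list) + 'j \<Rightarrow> 'j \<Rightarrow> real" where
    "w k j = (case k of Inl iq \<Rightarrow> gc (fst iq) (snd iq) j - v (fst iq) j | Inr j' \<Rightarrow> if j = j' then 1 else 0)" for k j
  define K' where "K' = Inl ` K \<union> Inr ` J"
  have fK': "finite K'" unfolding K'_def using fK fJ by simp
  have split: "(\<Sum>k\<in>K'. f k) = (\<Sum>iq\<in>K. f (Inl iq)) + (\<Sum>j\<in>J. f (Inr j))" for f :: "_ \<Rightarrow> real"
  proof -
    have "(\<Sum>k\<in>K'. f k) = (\<Sum>k\<in>Inl ` K. f k) + (\<Sum>k\<in>Inr ` J. f k)"
      unfolding K'_def using fK fJ by (intro sum.union_disjoint) auto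
    also have "\<dots> = (\<Sum>iq\<in>K. f (Inl iq)) + (\<Sum>j\<in>J. f (Inr j))"
      by (simp add: sum.reindex)
    finally show ?thesis .
  qed
  have delta_J: "(\<Sum>j'\<in>J. c j' * (if j = j' then 1 else 0)) = c j" if "j \<in> J" for c :: "'j \<Rightarrow> real" and j
  proof -
    have "(\<Sum>j'\<in>J. c j' * (if j = j' then 1 else 0)) = (\<Sum>j'\<in>J. if j = j' then c j' else 0)"
      by (intro sum.cong) auto
    also have "\<dots> = c j" using that fJ by simp
    finally show ?thesis .
  qed
  have ex_pos: "\<exists>x\<in>?FF. \<forall>i\<in>I. \<forall>p\<in>?Pth i. x (i,p) > 0 \<longrightarrow> (\<forall>q\<in>?Pth i. c i p x \<le> c i q x)"
    if "\<And>i p. i \<in> I \<Longrightarrow> p \<in> ?Pth i \<Longrightarrow> continuous_on ?FF (c i p)"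
    for c :: "'i \<Rightarrow> 'v list \<Rightarrow> ('i \<times> 'v list \<Rightarrow> real) \<Rightarrow> real"
    by (rule wardrop_exists[OF fI fP' ne dpos that])
  have noB: "\<not> (\<exists>\<mu>. (\<forall>k\<in>K'. \<mu> k \<ge> 0) \<and> (\<Sum>k\<in>K'. \<mu> k) = 1 \<and> (\<forall>j\<in>J. (\<Sum>k\<in>K'. \<mu> k * w k j) = 0))"
  proof
    assume "\<exists>\<mu>. (\<forall>k\<in>K'. \<mu> k \<ge> 0) \<and> (\<Sum>k\<in>K'. \<mu> k) = 1 \<and> (\<forall>j\<in>J. (\<Sum>k\<in>K'. \<mu> k * w k j) = 0)"
    then obtain \<mu> where \<mu>0: "\<forall>k\<in>K'. \<mu> k \<ge> 0" and \<mu>1: "(\<Sum>k\<in>K'. \<mu> k) = 1"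
      and \<mu>w: "\<forall>j\<in>J. (\<Sum>k\<in>K'. \<mu> k * w k j) = 0" by blast
    define TT where "TT = (\<Sum>iq\<in>K. \<mu> (Inl iq))"
    have \<mu>K: "\<mu> (Inl iq) \<ge> 0" if "iq \<in> K" for iq using \<mu>0 that unfolding K'_def by blast
    have \<mu>J: "\<mu> (Inr j) \<ge> 0" if "j \<in> J" for j using \<mu>0 that unfolding K'_def by blast
    have TT0: "TT \<ge> 0" unfolding TT_def using \<mu>K by (intro sum_nonneg) auto
    have E1: "(\<Sum>iq\<in>K. \<mu> (Inl iq) * (gc (fst iq) (snd iq) j - v (fst iq) j)) + \<mu> (Inr j) = 0" if j: "j \<in> J" for j
    proof -
      have "(\<Sum>j'\<in>J. \<mu> (Inr j') * w (Inr j') j) = \<mu> (Inr j)"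
        unfolding w_def using delta_J[OF j, of "\<lambda>j'. \<mu> (Inr j')"] by simp
      then show ?thesis using \<mu>w j split[of "\<lambda>k. \<mu> k * w k j"] by (simp add: w_def)
    qed
    have E2: "TT + (\<Sum>j\<in>J. \<mu> (Inr j)) = 1" using \<mu>1 split[of \<mu>] unfolding TT_def by simp
    define mK where "mK iq = (if iq \<in> K then \<mu> (Inl iq) else 0)" for iq
    have mK0: "mK iq \<ge> 0" for iq using \<mu>K by (simp add: mK_def)
    have mKsum: "(\<Sum>i\<in>I. \<Sum>q\<in>?Pth i. mK (i,q) * \<phi> i q) = (\<Sum>iq\<in>K. \<mu> (Inl iq) * \<phi> (fst iq) (snd iq))" for \<phi>
    proof -
      have "(\<Sum>i\<in>I. \<Sum>q\<in>?Pth i. mK (i,q) * \<phi> i q) = (\<Sum>(i,q)\<in>Sigma I ?Pth. mK (i,q) * \<phi> i q)"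
        using fI fP by (simp add: sum.Sigma)
      also have "\<dots> = (\<Sum>iq\<in>Sigma I ?Pth. if iq \<in> K then \<mu> (Inl iq) * \<phi> (fst iq) (snd iq) else 0)"
        by (intro sum.cong) (auto simp: mK_def)
      also have "\<dots> = (\<Sum>iq\<in>K. \<mu> (Inl iq) * \<phi> (fst iq) (snd iq))"
        unfolding K_def using fS by (simp add: sum.inter_filter)
      finally show ?thesis .
    qed
    have mKi: "(\<Sum>q\<in>?Pth i. mK (i,q)) \<le> TT" if i: "i \<in> I" for i
    proof -
      have "(\<Sum>q\<in>?Pth i. mK (i,q)) \<le> (\<Sum>i'\<in>I. \<Sum>q\<in>?Pth i'. mK (i',q))"
        using i fI mK0 by (intro member_le_sum sum_nonneg) auto
      also have "\<dots> = TT" using mKsum[of "\<lambda>_ _. 1"] by (simp add: TT_def)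
      finally show ?thesis .
    qed
    define mn where "mn = Min (insert 1 ((\<lambda>i. x0 (i, src i)) ` I))"
    have mn: "mn > 0" using fI src(2) by (auto simp: mn_def)
    have mnle: "mn \<le> x0 (i, src i)" if "i \<in> I" for i using fI that by (auto simp: mn_def)
    define \<epsilon> where "\<epsilon> = mn / (1 + TT)"
    have \<epsilon>: "\<epsilon> > 0" "\<epsilon> \<le> mn" "\<epsilon> * TT \<le> mn"
    proof -
      show "\<epsilon> > 0" using mn TT0 by (simp add: \<epsilon>_def)
      have "\<epsilon> * (1 + TT) = mn" using TT0 by (simp add: \<epsilon>_def)
      then show "\<epsilon> \<le> mn" "\<epsilon> * TT \<le> mn" using TT0 \<open>\<epsilon> > 0\<close>
        by (simp_all add: algebra_simps) (smt (verit) mult_nonneg_nonneg)+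
    qed
    define m where "m iq = \<epsilon> * mK iq" for iq
    obtain x' where x': "x' \<in> ?FF" "\<And>j. Gs x' j = Gs x0 j + (\<Sum>i\<in>I. \<Sum>q\<in>?Pth i. m (i,q) * (gc i q j - gc i (src i) j))"
    proof -
      have "\<exists>x'\<in>?FF. \<forall>j. Gs x' j = Gs x0 j + (\<Sum>i\<in>I. \<Sum>q\<in>?Pth i. m (i,q) * (gc i q j - gc i (src i) j))"
      proof (rule pert)
        show "src i \<in> ?Pth i" if "i \<in> I" for i using src that by blast
        show "m (i,q) \<ge> 0" for i q using \<epsilon> mK0 by (simp add: m_def)
        show "m (i, src i) = 0" for i using srcK by (simp add: m_def mK_def)
        show "(\<Sum>q\<in>?Pth i. m (i,q)) \<le> x0 (i, src i)" if i: "i \<in> I" for i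
        proof -
          have "(\<Sum>q\<in>?Pth i. m (i,q)) = \<epsilon> * (\<Sum>q\<in>?Pth i. mK (i,q))" by (simp add: m_def sum_distrib_left)
          also have "\<dots> \<le> \<epsilon> * TT" using mKi[OF i] \<epsilon>(1) by simp
          also have "\<dots> \<le> x0 (i, src i)" using \<epsilon>(3) mnle[OF i] by simp
          finally show ?thesis .
        qed
      qed
      then show ?thesis using that by blast
    qed
    have Gx': "Gs x' j = B j - \<epsilon> * \<mu> (Inr j)" if j: "j \<in> J" for j
    proof -
      have "(\<Sum>i\<in>I. \<Sum>q\<in>?Pth i. m (i,q) * (gc i q j - gc i (src i) j))
          = \<epsilon> * (\<Sum>i\<in>I. \<Sum>q\<in>?Pth i. mK (i,q) * (gc i q j - v i j))"
        by (simp add: m_def sum_distrib_left mult.assoc v_def)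
      also have "\<dots> = \<epsilon> * (\<Sum>iq\<in>K. \<mu> (Inl iq) * (gc (fst iq) (snd iq) j - v (fst iq) j))"
        by (simp add: mKsum)
      also have "\<dots> = - \<epsilon> * \<mu> (Inr j)" using E1[OF j] by (simp add: eq_neg_iff_add_eq_0[symmetric])
      finally show ?thesis using x'(2)[of j] BJ[OF j] by simp
    qed
    show False
    proof (cases "\<exists>j1\<in>J. \<mu> (Inr j1) > 0")
      case True
      then obtain j1 where j1: "j1 \<in> J" "\<mu> (Inr j1) > 0" by blast
      show False
      proof (rule par_contra[OF fbBv[OF x'(1)]])
        show "Bv x' \<noteq> B"
        proof
          assume "Bv x' = B"
          then have "Bv x' j1 = B j1" by simp
          then show False using Gx'[OF j1(1)] j1 \<epsilon>(1) by (simp add: Bv_def)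
        qed
        show "\<forall>j\<in>J. Bv x' j \<le> B j" using Gx' \<mu>J \<epsilon>(1) by (simp add: Bv_def)
      qed
    next
      case False
      then have \<mu>J0: "\<mu> (Inr j) = 0" if "j \<in> J" for j using \<mu>J[OF that] that by force
      then have "TT = 1" using E2 by simp
      then obtain k0 where k0: "k0 \<in> K" "\<mu> (Inl k0) > 0"
      proof -
        have "\<exists>k0\<in>K. \<mu> (Inl k0) > 0"
        proof (rule ccontr)
          assume "\<not> ?thesis"
          then have "TT \<le> 0" unfolding TT_def by (intro sum_nonpos) auto
          then show False using \<open>TT = 1\<close> by simp
        qed
        then show ?thesis using that by blast
      qed
      obtain i0 q0 where iq0: "k0 = (i0,q0)" "i0 \<in> I" "q0 \<in> ?Pth i0" using k0(1) KS by auto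
      define c0 where "c0 = \<mu> (Inl k0)"
      have c0: "c0 > 0" using k0 by (simp add: c0_def)
      have mKk0: "mK (i0,q0) = c0" using k0(1) iq0(1) by (simp add: mK_def c0_def)
      have E1': "(\<Sum>iq\<in>K. \<mu> (Inl iq) * (gc (fst iq) (snd iq) j - v (fst iq) j)) = 0" if "j \<in> J" for j
        using E1[OF that] \<mu>J0[OF that] by simp
      define m1 where "m1 = (\<lambda>ip. if ip = (i0,q0) then \<epsilon> else 0)"
      have m1sum: "(\<Sum>q\<in>?Pth i'. m1 (i',q)) = (if i' = i0 then \<epsilon> else 0)" for i'
        using fP iq0 by (cases "i' = i0") (auto simp: m1_def sum.delta')
      have q0src: "q0 \<noteq> src i0" using k0(1) iq0(1) srcK by metis
      obtain x1 where x1: "x1 \<in> ?FF" "\<And>j. Gs x1 j = Gs x0 j + (\<Sum>i'\<in>I. \<Sum>q\<in>?Pth i'. m1 (i',q) * (gc i' q j - gc i' (src i') j))"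
      proof -
        have "\<exists>x'\<in>?FF. \<forall>j. Gs x' j = Gs x0 j + (\<Sum>i'\<in>I. \<Sum>q\<in>?Pth i'. m1 (i',q) * (gc i' q j - gc i' (src i') j))"
        proof (rule pert)
          show "src i' \<in> ?Pth i'" if "i' \<in> I" for i' using src that by blast
          show "m1 (i',q) \<ge> 0" for i' q using \<epsilon> by (simp add: m1_def)
          show "m1 (i', src i') = 0" for i' using q0src by (auto simp: m1_def)
          show "(\<Sum>q\<in>?Pth i'. m1 (i',q)) \<le> x0 (i', src i')" if "i' \<in> I" for i'
            using m1sum \<epsilon> mnle[OF that] x0nn[OF that src(1)[OF that]] by auto
        qed
        then show ?thesis using that by blast
      qed
      have G1: "Gs x1 j' = Gs x0 j' + \<epsilon> * (gc i0 q0 j' - v i0 j')" for j'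
        using sum_sigma_delta[where I=I and P="?Pth" and c=\<epsilon> and f="\<lambda>i' q. gc i' q j' - gc i' (src i') j'", OF fI fP' iq0(2,3)]
        unfolding x1(2) m1_def v_def by simp
      define m2 where "m2 = (\<lambda>ip. m ip - (if ip = (i0,q0) then \<epsilon> * c0 else 0))"
      obtain x2 where x2: "x2 \<in> ?FF" "\<And>j. Gs x2 j = Gs x0 j + (\<Sum>i'\<in>I. \<Sum>q\<in>?Pth i'. m2 (i',q) * (gc i' q j - gc i' (src i') j))"
      proof -
        have "\<exists>x'\<in>?FF. \<forall>j. Gs x' j = Gs x0 j + (\<Sum>i'\<in>I. \<Sum>q\<in>?Pth i'. m2 (i',q) * (gc i' q j - gc i' (src i') j))"
        proof (rule pert)
          show "src i' \<in> ?Pth i'" if "i' \<in> I" for i' using src that by blast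
          show "m2 (i',q) \<ge> 0" for i' q
          proof (cases "(i',q) = (i0,q0)")
            case True then show ?thesis using mKk0 by (simp add: m2_def m_def)
          next
            case False
            then have "m2 (i',q) = \<epsilon> * mK (i',q)" unfolding m2_def m_def by (simp only: if_False)
            then show ?thesis using \<epsilon> mK0 by simp
          qed
          show "m2 (i', src i') = 0" for i' using q0src srcK by (auto simp: m2_def m_def mK_def)
          show "(\<Sum>q\<in>?Pth i'. m2 (i',q)) \<le> x0 (i', src i')" if i': "i' \<in> I" for i'
          proof -
            have "(\<Sum>q\<in>?Pth i'. m2 (i',q)) = (\<Sum>q\<in>?Pth i'. m (i',q)) - (\<Sum>q\<in>?Pth i'. (if (i',q) = (i0,q0) then \<epsilon> * c0 else 0))"
              by (simp add: m2_def sum_subtractf)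
            also have "\<dots> \<le> (\<Sum>q\<in>?Pth i'. m (i',q))"
              using \<epsilon>(1) c0 by (simp add: sum_nonneg)
            also have "\<dots> = \<epsilon> * (\<Sum>q\<in>?Pth i'. mK (i',q))" by (simp add: m_def sum_distrib_left)
            also have "\<dots> \<le> \<epsilon> * TT" using mKi[OF i'] \<epsilon>(1) by simp
            also have "\<dots> \<le> x0 (i', src i')" using \<epsilon>(3) mnle[OF i'] by simp
            finally show ?thesis .
          qed
        qed
        then show ?thesis using that by blast
      qed
      have G2: "Gs x2 j = Gs x0 j - \<epsilon> * c0 * (gc i0 q0 j - v i0 j)" if j: "j \<in> J" for j
      proof -
        have "(\<Sum>i'\<in>I. \<Sum>q\<in>?Pth i'. m2 (i',q) * (gc i' q j - gc i' (src i') j))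
           = (\<Sum>i'\<in>I. \<Sum>q\<in>?Pth i'. m (i',q) * (gc i' q j - gc i' (src i') j))
             - (\<Sum>i'\<in>I. \<Sum>q\<in>?Pth i'. (if (i',q) = (i0,q0) then \<epsilon> * c0 else 0) * (gc i' q j - gc i' (src i') j))"
          by (simp add: m2_def left_diff_distrib sum_subtractf)
        also have "(\<Sum>i'\<in>I. \<Sum>q\<in>?Pth i'. m (i',q) * (gc i' q j - gc i' (src i') j))
           = \<epsilon> * (\<Sum>i\<in>I. \<Sum>q\<in>?Pth i. mK (i,q) * (gc i q j - v i j))"
          by (simp add: m_def sum_distrib_left mult.assoc v_def)
        also have "\<dots> = \<epsilon> * (\<Sum>iq\<in>K. \<mu> (Inl iq) * (gc (fst iq) (snd iq) j - v (fst iq) j))"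
          by (simp add: mKsum)
        also have "\<dots> = 0" using E1'[OF j] by simp
        also have "(\<Sum>i'\<in>I. \<Sum>q\<in>?Pth i'. (if (i',q) = (i0,q0) then \<epsilon> * c0 else 0) * (gc i' q j - gc i' (src i') j))
           = \<epsilon> * c0 * (gc i0 q0 j - v i0 j)"
          using sum_sigma_delta[where I=I and P="?Pth" and c="\<epsilon> * c0" and f="\<lambda>i' q. gc i' q j - gc i' (src i') j", OF fI fP' iq0(2,3)]
          by (simp add: v_def)
        finally show ?thesis using x2(2)[of j] by simp
      qed
      obtain j0 where j0: "j0 \<in> J" "gc i0 q0 j0 \<noteq> v i0 j0" using k0(1) iq0(1) unfolding K_def by auto
      show False
      proof (rule ext_contra[OF fbBv[OF x1(1)] fbBv[OF x2(1)], of "c0 / (1 + c0)"])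
        show "Bv x1 \<noteq> Bv x2"
        proof
          assume "Bv x1 = Bv x2"
          then have "Bv x1 j0 = Bv x2 j0" by simp
          then have "\<epsilon> * (1 + c0) * (gc i0 q0 j0 - v i0 j0) = 0"
            using j0(1) G1[of j0] G2[OF j0(1)] by (simp add: Bv_def algebra_simps)
          then show False using \<epsilon>(1) c0 j0(2) by simp
        qed
        show "0 < c0 / (1 + c0)" using c0 by simp
        show "c0 / (1 + c0) < 1" using c0 by simp
        show "B = (\<lambda>j. c0 / (1 + c0) * Bv x1 j + (1 - c0 / (1 + c0)) * Bv x2 j)"
        proof
          fix j show "B j = c0 / (1 + c0) * Bv x1 j + (1 - c0 / (1 + c0)) * Bv x2 j"
          proof (cases "j \<in> J")
            case True
            have "c0 / (1 + c0) * (Gs x0 j + \<epsilon> * (gc i0 q0 j - v i0 j))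
                + (1 - c0 / (1 + c0)) * (Gs x0 j - \<epsilon> * c0 * (gc i0 q0 j - v i0 j)) = Gs x0 j"
            proof -
              have den: "(1::real) + c0 \<noteq> 0" using c0 by simp
              have comb: "c0 / (1 + c0) * X + (1 - c0 / (1 + c0)) * Y = (c0 * X + Y) / (1 + c0)" for X Y :: real
              proof -
                have h1: "1 - c0 / (1 + c0) = 1 / (1 + c0)" using den by (simp add: field_simps)
                show ?thesis unfolding h1 by (simp add: add_divide_distrib)
              qed
              have "c0 * (Gs x0 j + \<epsilon> * (gc i0 q0 j - v i0 j)) + (Gs x0 j - \<epsilon> * c0 * (gc i0 q0 j - v i0 j))
                  = (1 + c0) * Gs x0 j" by (simp add: algebra_simps)
              then show ?thesis unfolding comb using den by simp
            qed
            then show ?thesis using True BJ[OF True] G1[of j] G2[OF True] by (simp add: Bv_def)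
          next
            case False then show ?thesis using Bout by (simp add: Bv_def)
          qed
        qed
      qed
    qed
  qed
  obtain lam0 where lam0: "\<forall>k\<in>K'. (\<Sum>j\<in>J. lam0 j * w k j) > 0"
    using gordan[OF fK' fJ, of w] noB by blast
  have lam0pos: "lam0 j > 0" if j: "j \<in> J" for j
  proof -
    have "Inr j \<in> K'" using j by (simp add: K'_def)
    then have "(\<Sum>j'\<in>J. lam0 j' * w (Inr j) j') > 0" using lam0 by blast
    moreover have "(\<Sum>j'\<in>J. lam0 j' * w (Inr j) j') = lam0 j"
    proof -
      have "(\<Sum>j'\<in>J. lam0 j' * w (Inr j) j') = (\<Sum>j'\<in>J. if j' = j then lam0 j' else 0)"
        by (intro sum.cong) (auto simp: w_def)
      also have "\<dots> = lam0 j" using j fJ by simp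
      finally show ?thesis .
    qed
    ultimately show ?thesis by simp
  qed
  define val where "val iq = (\<Sum>j\<in>J. lam0 j * (gc (fst iq) (snd iq) j - v (fst iq) j))" for iq
  have Kpos: "val iq > 0" if "iq \<in> K" for iq
  proof -
    have "Inl iq \<in> K'" using that by (simp add: K'_def)
    then have "(\<Sum>j\<in>J. lam0 j * w (Inl iq) j) > 0" using lam0 by blast
    then show ?thesis by (simp add: w_def val_def)
  qed
  define \<phi> where "\<phi> x = (\<Sum>iq\<in>Sigma I ?Pth. \<bar>\<tau> (fst iq) (snd iq) x\<bar>)" for x
  have c\<phi>: "continuous_on ?F \<phi>"
    unfolding \<phi>_def
  proof (intro continuous_on_sum continuous_on_rabs)
    fix iq assume "iq \<in> Sigma I ?Pth"
    then show "continuous_on ?F (\<tau> (fst iq) (snd iq))" using tau_cont by auto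
  qed
  have cF: "compact ?F" using compact_FF[OF fI fP'] F_eq by simp
  obtain Tb where Tb: "\<forall>y\<in>\<phi> ` ?F. \<bar>y\<bar> \<le> Tb"
    using compact_imp_bounded[OF compact_continuous_image[OF c\<phi> cF]] unfolding bounded_real by blast
  define T2 where "T2 = max Tb 0"
  have T20: "T2 \<ge> 0" by (simp add: T2_def)
  have tb: "\<bar>\<tau> i p x\<bar> \<le> T2" if x: "x \<in> ?F" and i: "i \<in> I" and p: "p \<in> ?Pth i" for x i p
  proof -
    have "\<bar>\<tau> i p x\<bar> = \<bar>\<tau> (fst (i,p)) (snd (i,p)) x\<bar>" by simp
    also have "\<dots> \<le> \<phi> x" unfolding \<phi>_def using fS i p by (intro member_le_sum) auto
    also have "\<dots> \<le> Tb" using Tb x by force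
    also have "\<dots> \<le> T2" by (simp add: T2_def)
    finally show ?thesis .
  qed
  define \<delta> where "\<delta> = Min (insert 1 (val ` K))"
  have \<delta>: "\<delta> > 0" using fK Kpos by (auto simp: \<delta>_def)
  have \<delta>le: "\<delta> \<le> val iq" if "iq \<in> K" for iq using fK that by (auto simp: \<delta>_def)
  define M where "M = (2 * T2 + 1) / \<delta>"
  have M: "M > 0" "M * \<delta> = 2 * T2 + 1" using \<delta> T20 by (auto simp: M_def)
  define lam where "lam j = M * lam0 j" for j
  have lampos: "\<forall>j\<in>J. lam j > 0" using M lam0pos by (simp add: lam_def)
  have gcost_eq: "gcost J \<tau> g lam i p x = \<tau> i p x + M * (\<Sum>j\<in>J. lam0 j * gc i p j)"
    if x: "x \<in> ?F" and i: "i \<in> I" and p: "p \<in> ?Pth i" for x i p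
  proof -
    have "(\<Sum>j\<in>J. lam j * g i p j x) = (\<Sum>j\<in>J. M * (lam0 j * gc i p j))"
      using gconst[OF x i p] by (intro sum.cong) (auto simp: lam_def)
    then show ?thesis by (simp add: gcost_def sum_distrib_left)
  qed
  have WEne: "WE V E s t I d J \<tau> g lam \<noteq> {}"
  proof -
    have "\<exists>x\<in>?FF. \<forall>i\<in>I. \<forall>p\<in>?Pth i. x (i,p) > 0 \<longrightarrow> (\<forall>q\<in>?Pth i. gcost J \<tau> g lam i p x \<le> gcost J \<tau> g lam i q x)"
    proof (rule ex_pos)
      fix i p assume i: "i \<in> I" and p: "p \<in> ?Pth i"
      have "continuous_on ?F (\<lambda>x. \<tau> i p x + M * (\<Sum>j\<in>J. lam0 j * gc i p j))"
        using tau_cont i p by (intro continuous_on_add continuous_on_const) auto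
      then have "continuous_on ?F (gcost J \<tau> g lam i p)"
        by (rule continuous_on_eq) (simp add: gcost_eq i p)
      then show "continuous_on ?FF (gcost J \<tau> g lam i p)" using F_eq by simp
    qed
    then obtain xw where "xw \<in> ?FF" "\<forall>i\<in>I. \<forall>p\<in>?Pth i. xw (i,p) > 0 \<longrightarrow> (\<forall>q\<in>?Pth i. gcost J \<tau> g lam i p xw \<le> gcost J \<tau> g lam i q xw)"
      by blast
    then have "xw \<in> WE V E s t I d J \<tau> g lam" unfolding WE_def using F_eq by simp
    then show ?thesis by blast
  qed
  have final: "Gext V E s t I g j u \<le> B j" if u: "u \<in> WE V E s t I d J \<tau> g lam" and j: "j \<in> J" for u j
  proof -
    have uF: "u \<in> ?F" using u by (simp add: WE_def)
    have uFF: "u \<in> ?FF" using uF F_eq by simp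
    have uWE: "\<forall>i\<in>I. \<forall>p\<in>?Pth i. u (i,p) > 0 \<longrightarrow> (\<forall>q\<in>?Pth i. gcost J \<tau> g lam i p u \<le> gcost J \<tau> g lam i q u)"
      using u by (simp add: WE_def)
    have used: "gc i p j = v i j" if i: "i \<in> I" and p: "p \<in> ?Pth i" and up: "u (i,p) > 0" for i p
    proof (rule ccontr)
      assume "gc i p j \<noteq> v i j"
      then have K: "(i,p) \<in> K" using i p j by (auto simp: K_def)
      have le: "gcost J \<tau> g lam i p u \<le> gcost J \<tau> g lam i (src i) u" using uWE i p up src(1)[OF i] by blast
      have vdiff: "val (i,p) = (\<Sum>j\<in>J. lam0 j * gc i p j) - (\<Sum>j\<in>J. lam0 j * gc i (src i) j)"
        by (simp add: val_def v_def right_diff_distrib sum_subtractf)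
      have "M * \<delta> \<le> M * val (i,p)" using \<delta>le[OF K] M(1) by simp
      then have big: "2 * T2 + 1 \<le> M * (\<Sum>j\<in>J. lam0 j * gc i p j) - M * (\<Sum>j\<in>J. lam0 j * gc i (src i) j)"
        using M(2) vdiff by (simp add: right_diff_distrib)
      have "\<bar>\<tau> i p u\<bar> \<le> T2" "\<bar>\<tau> i (src i) u\<bar> \<le> T2" using tb[OF uF i p] tb[OF uF i src(1)[OF i]] by auto
      then show False using le big gcost_eq[OF uF i p] gcost_eq[OF uF i src(1)[OF i]] by linarith
    qed
    have "Gext V E s t I g j u = Gs u j" by (rule Gext_eq[OF uF j])
    also have "\<dots> = (\<Sum>i\<in>I. v i j * d i)"
      unfolding Gs_def by (rule used_eq[where gc="\<lambda>i p. gc i p j" and v="\<lambda>i. v i j", OF uFF fP' used])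
    also have "\<dots> = Gs x0 j"
    proof -
      have x0used: "\<And>i p. i \<in> I \<Longrightarrow> p \<in> ?Pth i \<Longrightarrow> x0 (i,p) > 0 \<Longrightarrow> gc i p j = v i j"
        using claim j by blast
      show ?thesis unfolding Gs_def
        using used_eq[where gc="\<lambda>i p. gc i p j" and v="\<lambda>i. v i j", OF x0FF fP' x0used] by simp
    qed
    also have "\<dots> = B j" using BJ[OF j] by simp
    finally show ?thesis by simp
  qed
  show ?thesis using lampos WEne final by blast
qed

end
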